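(* Let $H_1<G_1$ and $H_2<G_2$ be groups and $K_1,K_2$ groups. If $H_1<G_1$ is relatively sofic over $K_1$ and $H_2<G_2$ is relatively sofic over $K_2$, then $H_1\times H_2<G_1\times G_2$ is relatively sofic over $K_1\times K_2$.
   Context: $H<G$ is relatively sofic over a group $K$ if there exist a sequence of inclusions of groups $(H_i<G_i)_{i\in\mathbb N}$ with all $G_i$ sofic and all $H_i$ amenable, a free ultrafilter $\omega$ on $\mathbb N$, and an embedding $\pi:G\to\prod_\omega(G_i\times K)$ into the algebraic ultraproduct such that $\pi(G)\cap\prod_\omega(H_i\times K)=\pi(H)$. The algebraic ultraproduct is $\prod_\omega L_i=(\prod_i L_i)/N$ with $N=\{(g_i):\{i:g_i=1\}\in\omega\}$. *)

theory Defs
  imports "HOL-Algebra.Algebra"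
begin

definition free_ultrafilter :: "nat set set \<Rightarrow> bool" where
  "free_ultrafilter U \<longleftrightarrow>
     UNIV \<in> U \<and> {} \<notin> U \<and>
     (\<forall>A B. A \<in> U \<longrightarrow> A \<subseteq> B \<longrightarrow> B \<in> U) \<and>
     (\<forall>A B. A \<in> U \<longrightarrow> B \<in> U \<longrightarrow> A \<inter> B \<in> U) \<and>
     (\<forall>A. A \<in> U \<or> - A \<in> U) \<and>
     (\<forall>A. finite A \<longrightarrow> A \<notin> U)"

definition amenable :: "('a, 'b) monoid_scheme \<Rightarrow> bool" where
  "amenable G \<longleftrightarrow> (\<exists>m :: 'a set \<Rightarrow> real.
     (\<forall>A. A \<subseteq> carrier G \<longrightarrow> 0 \<le> m A) \<and>
     m (carrier G) = 1 \<and>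
     (\<forall>A B. A \<subseteq> carrier G \<longrightarrow> B \<subseteq> carrier G \<longrightarrow> A \<inter> B = {} \<longrightarrow> m (A \<union> B) = m A + m B) \<and>
     (\<forall>g A. g \<in> carrier G \<longrightarrow> A \<subseteq> carrier G \<longrightarrow> m (g <#\<^bsub>G\<^esub> A) = m A))"

definition hamming :: "nat \<Rightarrow> (nat \<Rightarrow> nat) \<Rightarrow> (nat \<Rightarrow> nat) \<Rightarrow> real" where
  "hamming n \<sigma> \<tau> = real (card {i. i < n \<and> \<sigma> i \<noteq> \<tau> i}) / real n"

definition sofic :: "('a, 'b) monoid_scheme \<Rightarrow> bool" where
  "sofic G \<longleftrightarrow> (\<forall>F \<epsilon>. finite F \<longrightarrow> F \<subseteq> carrier G \<longrightarrow> (\<epsilon>::real) > 0 \<longrightarrow>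
     (\<exists>(n::nat) (\<phi> :: 'a \<Rightarrow> nat \<Rightarrow> nat). n > 0 \<and>
        (\<forall>g \<in> carrier G. \<phi> g permutes {..<n}) \<and>
        \<phi> \<one>\<^bsub>G\<^esub> = id \<and>
        (\<forall>g\<in>F. \<forall>h\<in>F. hamming n (\<phi> (g \<otimes>\<^bsub>G\<^esub> h)) (\<phi> g \<circ> \<phi> h) < \<epsilon>) \<and>
        (\<forall>g\<in>F. g \<noteq> \<one>\<^bsub>G\<^esub> \<longrightarrow> hamming n (\<phi> g) id > 1 - \<epsilon>)))"

definition prodgrp :: "(nat \<Rightarrow> ('a, 'b) monoid_scheme) \<Rightarrow> (nat \<Rightarrow> 'a) monoid" where
  "prodgrp L = \<lparr> carrier = Pi UNIV (\<lambda>i. carrier (L i)),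
                 Group.monoid.mult = (\<lambda>x y i. x i \<otimes>\<^bsub>L i\<^esub> y i),
                 Group.monoid.one = (\<lambda>i. \<one>\<^bsub>L i\<^esub>) \<rparr>"

definition ultraN :: "nat set set \<Rightarrow> (nat \<Rightarrow> ('a, 'b) monoid_scheme) \<Rightarrow> (nat \<Rightarrow> 'a) set" where
  "ultraN U L = {x \<in> carrier (prodgrp L). {i. x i = \<one>\<^bsub>L i\<^esub>} \<in> U}"

definition ultraprod :: "nat set set \<Rightarrow> (nat \<Rightarrow> ('a, 'b) monoid_scheme) \<Rightarrow> ((nat \<Rightarrow> 'a) set) monoid" where
  "ultraprod U L = prodgrp L Mod ultraN U L"

definition ultrasub :: "nat set set \<Rightarrow> (nat \<Rightarrow> ('a, 'b) monoid_scheme) \<Rightarrow> (nat \<Rightarrow> 'a set) \<Rightarrow> ((nat \<Rightarrow> 'a) set) set" where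
  "ultrasub U L S = (\<lambda>x. ultraN U L #>\<^bsub>prodgrp L\<^esub> x) ` Pi UNIV S"

text \<open>The witnessing groups G_i live in the type 'c (given via TYPE('c)).\<close>
definition rel_sofic_over :: "'c itself \<Rightarrow> 'a set \<Rightarrow> ('a, 'b) monoid_scheme \<Rightarrow> ('k, 'm) monoid_scheme \<Rightarrow> bool" where
  "rel_sofic_over _ H G K \<longleftrightarrow>
    (\<exists>(Gs :: nat \<Rightarrow> 'c monoid) (Hs :: nat \<Rightarrow> 'c set) U \<pi>.
       (\<forall>i. group (Gs i) \<and> subgroup (Hs i) (Gs i) \<and> sofic (Gs i) \<and>
            amenable ((Gs i)\<lparr>carrier := Hs i\<rparr>)) \<and>
       free_ultrafilter U \<and>
       \<pi> \<in> hom G (ultraprod U (\<lambda>i. Gs i \<times>\<times> K)) \<and>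
       inj_on \<pi> (carrier G) \<and>
       \<pi> ` carrier G \<inter> ultrasub U (\<lambda>i. Gs i \<times>\<times> K) (\<lambda>i. Hs i \<times> carrier K) = \<pi> ` H)"

end

theory Submission
  imports Defs
begin

lemma gM: "group G \<Longrightarrow> x \<in> carrier G \<Longrightarrow> y \<in> carrier G \<Longrightarrow> x \<otimes>\<^bsub>G\<^esub> y \<in> carrier G"
  by (simp add: group.is_monoid monoid.m_closed)
lemma gA: "group G \<Longrightarrow> x \<in> carrier G \<Longrightarrow> y \<in> carrier G \<Longrightarrow> z \<in> carrier G \<Longrightarrow> x \<otimes>\<^bsub>G\<^esub> y \<otimes>\<^bsub>G\<^esub> z = x \<otimes>\<^bsub>G\<^esub> (y \<otimes>\<^bsub>G\<^esub> z)"
  by (simp add: group.is_monoid monoid.m_assoc)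
lemma g1: "group G \<Longrightarrow> \<one>\<^bsub>G\<^esub> \<in> carrier G"
  by (simp add: group.is_monoid monoid.one_closed)
lemma gI: "group G \<Longrightarrow> x \<in> carrier G \<Longrightarrow> inv\<^bsub>G\<^esub> x \<in> carrier G"
  by (simp add: group.inv_closed)
lemma gl1: "group G \<Longrightarrow> x \<in> carrier G \<Longrightarrow> \<one>\<^bsub>G\<^esub> \<otimes>\<^bsub>G\<^esub> x = x"
  by (simp add: group.is_monoid monoid.l_one)
lemma gr1: "group G \<Longrightarrow> x \<in> carrier G \<Longrightarrow> x \<otimes>\<^bsub>G\<^esub> \<one>\<^bsub>G\<^esub> = x"
  by (simp add: group.is_monoid monoid.r_one)
lemma prodgrp_carrier: "carrier (prodgrp L) = Pi UNIV (\<lambda>i. carrier (L i))"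
  by (simp add: prodgrp_def)
lemma prodgrp_mult: "x \<otimes>\<^bsub>prodgrp L\<^esub> y = (\<lambda>i. x i \<otimes>\<^bsub>L i\<^esub> y i)"
  by (simp add: prodgrp_def)
lemma prodgrp_one: "\<one>\<^bsub>prodgrp L\<^esub> = (\<lambda>i. \<one>\<^bsub>L i\<^esub>)"
  by (simp add: prodgrp_def)

lemma prodgrp_group:
  assumes gr: "\<And>i. group (L i)"
  shows "group (prodgrp L)"
proof (rule groupI)
  fix x y assume "x \<in> carrier (prodgrp L)" "y \<in> carrier (prodgrp L)"
  then show "x \<otimes>\<^bsub>prodgrp L\<^esub> y \<in> carrier (prodgrp L)"
    by (auto simp: prodgrp_carrier prodgrp_mult intro: gM[OF gr])
next
  show "\<one>\<^bsub>prodgrp L\<^esub> \<in> carrier (prodgrp L)"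
    by (auto simp: prodgrp_carrier prodgrp_one intro: g1[OF gr])
next
  fix x y z assume "x \<in> carrier (prodgrp L)" "y \<in> carrier (prodgrp L)" "z \<in> carrier (prodgrp L)"
  then show "x \<otimes>\<^bsub>prodgrp L\<^esub> y \<otimes>\<^bsub>prodgrp L\<^esub> z = x \<otimes>\<^bsub>prodgrp L\<^esub> (y \<otimes>\<^bsub>prodgrp L\<^esub> z)"
    by (auto simp: prodgrp_carrier prodgrp_mult intro!: ext gA[OF gr])
next
  fix x assume "x \<in> carrier (prodgrp L)"
  then show "\<one>\<^bsub>prodgrp L\<^esub> \<otimes>\<^bsub>prodgrp L\<^esub> x = x"
    by (auto simp: prodgrp_carrier prodgrp_mult prodgrp_one intro!: ext gl1[OF gr])
next
  fix x assume x: "x \<in> carrier (prodgrp L)"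
  show "\<exists>y\<in>carrier (prodgrp L). y \<otimes>\<^bsub>prodgrp L\<^esub> x = \<one>\<^bsub>prodgrp L\<^esub>"
    using x by (auto simp: prodgrp_carrier prodgrp_mult prodgrp_one
        intro!: bexI[of _ "\<lambda>i. inv\<^bsub>L i\<^esub> (x i)"] ext group.l_inv[OF gr] group.inv_closed[OF gr])
qed

lemma prodgrp_inv:
  assumes gr: "\<And>i. group (L i)" and x: "x \<in> carrier (prodgrp L)"
  shows "inv\<^bsub>prodgrp L\<^esub> x = (\<lambda>i. inv\<^bsub>L i\<^esub> (x i))"
proof -
  interpret P: group "prodgrp L" by (rule prodgrp_group[OF gr])
  show ?thesis
    using x by (intro P.inv_equality) (auto simp: prodgrp_carrier prodgrp_mult prodgrp_one
        intro!: ext group.l_inv[OF gr] group.inv_closed[OF gr])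
qed

lemma fu_mono: "free_ultrafilter U \<Longrightarrow> A \<in> U \<Longrightarrow> A \<subseteq> B \<Longrightarrow> B \<in> U"
  unfolding free_ultrafilter_def by blast
lemma fu_int: "free_ultrafilter U \<Longrightarrow> A \<in> U \<Longrightarrow> B \<in> U \<Longrightarrow> A \<inter> B \<in> U"
  unfolding free_ultrafilter_def by blast
lemma fu_UNIV: "free_ultrafilter U \<Longrightarrow> UNIV \<in> U"
  unfolding free_ultrafilter_def by blast
lemma fu_empty: "free_ultrafilter U \<Longrightarrow> {} \<notin> U"
  unfolding free_ultrafilter_def by blast
lemma fu_compl: "free_ultrafilter U \<Longrightarrow> A \<in> U \<or> - A \<in> U"
  unfolding free_ultrafilter_def by blast
lemma fu_finite: "free_ultrafilter U \<Longrightarrow> finite A \<Longrightarrow> A \<notin> U"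
  unfolding free_ultrafilter_def by blast

lemma ultraN_normal:
  assumes gr: "\<And>i. group (L i)" and U: "free_ultrafilter U"
  shows "ultraN U L \<lhd> prodgrp L"
proof -
  interpret P: group "prodgrp L" by (rule prodgrp_group[OF gr])
  have sub: "subgroup (ultraN U L) (prodgrp L)"
  proof (rule P.subgroupI)
    show "ultraN U L \<subseteq> carrier (prodgrp L)" by (auto simp: ultraN_def)
    show "ultraN U L \<noteq> {}"
      using fu_UNIV[OF U] by (auto simp: ultraN_def intro!: exI[of _ "\<one>\<^bsub>prodgrp L\<^esub>"]
          simp: prodgrp_one)
  next
    fix a assume a: "a \<in> ultraN U L"
    then have ac: "a \<in> carrier (prodgrp L)" by (simp add: ultraN_def)
    have "{i. a i = \<one>\<^bsub>L i\<^esub>} \<subseteq> {i. inv\<^bsub>L i\<^esub> (a i) = \<one>\<^bsub>L i\<^esub>}"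
      by (auto simp: monoid.inv_one[OF group.is_monoid[OF gr]])
    then show "inv\<^bsub>prodgrp L\<^esub> a \<in> ultraN U L"
      using a ac fu_mono[OF U] by (auto simp: ultraN_def prodgrp_inv[OF gr] prodgrp_carrier gI[OF gr] Pi_iff)
  next
    fix a b assume a: "a \<in> ultraN U L" and b: "b \<in> ultraN U L"
    have "{i. a i = \<one>\<^bsub>L i\<^esub>} \<inter> {i. b i = \<one>\<^bsub>L i\<^esub>} \<subseteq> {i. a i \<otimes>\<^bsub>L i\<^esub> b i = \<one>\<^bsub>L i\<^esub>}"
      by (auto simp: gl1[OF gr] g1[OF gr])
    then show "a \<otimes>\<^bsub>prodgrp L\<^esub> b \<in> ultraN U L"
      using a b fu_mono[OF U] fu_int[OF U] P.m_closed
      by (auto simp: ultraN_def prodgrp_mult) blast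
  qed
  show ?thesis
  proof (subst P.normal_inv_iff, intro conjI sub ballI)
    fix x h assume x: "x \<in> carrier (prodgrp L)" and h: "h \<in> ultraN U L"
    have hc: "h \<in> carrier (prodgrp L)" using h by (simp add: ultraN_def)
    have "{i. h i = \<one>\<^bsub>L i\<^esub>} \<subseteq> {i. x i \<otimes>\<^bsub>L i\<^esub> h i \<otimes>\<^bsub>L i\<^esub> inv\<^bsub>L i\<^esub> (x i) = \<one>\<^bsub>L i\<^esub>}"
      using x by (auto simp: prodgrp_carrier group.r_inv[OF gr] gr1[OF gr] Pi_iff)
    then show "x \<otimes>\<^bsub>prodgrp L\<^esub> h \<otimes>\<^bsub>prodgrp L\<^esub> inv\<^bsub>prodgrp L\<^esub> x \<in> ultraN U L"
      using h x hc fu_mono[OF U] P.m_closed P.inv_closed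
      by (auto simp: ultraN_def prodgrp_mult prodgrp_inv[OF gr]) 
  qed
qed


lemma ginv_eq:
  assumes "group G" "a \<in> carrier G" "b \<in> carrier G"
  shows "(a \<otimes>\<^bsub>G\<^esub> inv\<^bsub>G\<^esub> b = \<one>\<^bsub>G\<^esub>) = (a = b)"
proof -
  interpret group G by fact
  show ?thesis
  proof
    assume "a \<otimes>\<^bsub>G\<^esub> inv\<^bsub>G\<^esub> b = \<one>\<^bsub>G\<^esub>"
    then have "a \<otimes>\<^bsub>G\<^esub> inv\<^bsub>G\<^esub> b \<otimes>\<^bsub>G\<^esub> b = b" using assms by simp
    then show "a = b" using assms by (simp add: m_assoc)
  next
    assume "a = b" then show "a \<otimes>\<^bsub>G\<^esub> inv\<^bsub>G\<^esub> b = \<one>\<^bsub>G\<^esub>" using assms by simp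
  qed
qed

lemma ultra_coset_eq:
  assumes gr: "\<And>i. group (L i)" and U: "free_ultrafilter U"
    and z: "z \<in> carrier (prodgrp L)" and z': "z' \<in> carrier (prodgrp L)"
  shows "(ultraN U L #>\<^bsub>prodgrp L\<^esub> z = ultraN U L #>\<^bsub>prodgrp L\<^esub> z') \<longleftrightarrow> {i. z i = z' i} \<in> U"
proof -
  interpret P: group "prodgrp L" by (rule prodgrp_group[OF gr])
  have sub: "subgroup (ultraN U L) (prodgrp L)"
    using ultraN_normal[OF gr U] by (simp add: normal_def)
  have "(ultraN U L #>\<^bsub>prodgrp L\<^esub> z = ultraN U L #>\<^bsub>prodgrp L\<^esub> z') \<longleftrightarrow>
        z \<in> ultraN U L #>\<^bsub>prodgrp L\<^esub> z'"
    by (metis P.rcos_self P.repr_independence sub z z')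
  also have "\<dots> \<longleftrightarrow> z \<otimes>\<^bsub>prodgrp L\<^esub> inv\<^bsub>prodgrp L\<^esub> z' \<in> ultraN U L"
    using subgroup.rcos_module[OF sub P.is_group z' z] .
  also have "\<dots> \<longleftrightarrow> {i. z i = z' i} \<in> U"
  proof -
    have "\<And>i. (z i \<otimes>\<^bsub>L i\<^esub> inv\<^bsub>L i\<^esub> (z' i) = \<one>\<^bsub>L i\<^esub>) = (z i = z' i)"
      using z z' by (intro ginv_eq[OF gr]) (auto simp: prodgrp_carrier)
    moreover have "z \<otimes>\<^bsub>prodgrp L\<^esub> inv\<^bsub>prodgrp L\<^esub> z' \<in> carrier (prodgrp L)"
      using z z' by simp
    ultimately show ?thesis
      by (simp add: ultraN_def prodgrp_mult prodgrp_inv[OF gr z'])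
  qed
  finally show ?thesis .
qed

lemma ultra_sub_iff:
  assumes gr: "\<And>i. group (L i)" and U: "free_ultrafilter U"
    and S: "\<And>i. S i \<subseteq> carrier (L i)" "\<And>i. \<one>\<^bsub>L i\<^esub> \<in> S i"
    and z: "z \<in> carrier (prodgrp L)"
  shows "(ultraN U L #>\<^bsub>prodgrp L\<^esub> z \<in> ultrasub U L S) \<longleftrightarrow> {i. z i \<in> S i} \<in> U"
proof
  assume "ultraN U L #>\<^bsub>prodgrp L\<^esub> z \<in> ultrasub U L S"
  then obtain w where w: "w \<in> Pi UNIV S" and e: "ultraN U L #>\<^bsub>prodgrp L\<^esub> z = ultraN U L #>\<^bsub>prodgrp L\<^esub> w"
    by (auto simp: ultrasub_def)
  have wc: "w \<in> carrier (prodgrp L)" using w S by (auto simp: prodgrp_carrier)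
  have "{i. z i = w i} \<in> U" using e ultra_coset_eq[OF gr U z wc] by simp
  moreover have "{i. z i = w i} \<subseteq> {i. z i \<in> S i}" using w by auto
  ultimately show "{i. z i \<in> S i} \<in> U" using fu_mono[OF U] by blast
next
  assume A: "{i. z i \<in> S i} \<in> U"
  define w where "w = (\<lambda>i. if z i \<in> S i then z i else \<one>\<^bsub>L i\<^esub>)"
  have w: "w \<in> Pi UNIV S" using S by (auto simp: w_def)
  have wc: "w \<in> carrier (prodgrp L)" using w S by (auto simp: prodgrp_carrier)
  have "{i. z i \<in> S i} \<subseteq> {i. z i = w i}" by (auto simp: w_def)
  then have "{i. z i = w i} \<in> U" using A fu_mono[OF U] by blast
  then have "ultraN U L #>\<^bsub>prodgrp L\<^esub> z = ultraN U L #>\<^bsub>prodgrp L\<^esub> w"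
    using ultra_coset_eq[OF gr U z wc] by simp
  then show "ultraN U L #>\<^bsub>prodgrp L\<^esub> z \<in> ultrasub U L S"
    using w by (auto simp: ultrasub_def)
qed

lemma ultra_carrier:
  "carrier (ultraprod U L) = RCOSETS (prodgrp L) (ultraN U L)"
  by (simp add: ultraprod_def FactGroup_def)

lemma ultra_coset_in:
  "z \<in> carrier (prodgrp L) \<Longrightarrow> ultraN U L #>\<^bsub>prodgrp L\<^esub> z \<in> carrier (ultraprod U L)"
  by (auto simp: ultra_carrier RCOSETS_def)

lemma ultra_mult:
  assumes gr: "\<And>i. group (L i)" and U: "free_ultrafilter U"
    and x: "x \<in> carrier (prodgrp L)" and y: "y \<in> carrier (prodgrp L)"
  shows "(ultraN U L #>\<^bsub>prodgrp L\<^esub> x) \<otimes>\<^bsub>ultraprod U L\<^esub> (ultraN U L #>\<^bsub>prodgrp L\<^esub> y)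
       = ultraN U L #>\<^bsub>prodgrp L\<^esub> (x \<otimes>\<^bsub>prodgrp L\<^esub> y)"
  using normal.rcos_sum[OF ultraN_normal[OF gr U] x y]
  by (simp add: ultraprod_def FactGroup_def)

lemma ultra_rep:
  assumes "XX \<in> carrier (ultraprod U L)"
  obtains z where "z \<in> carrier (prodgrp L)" "XX = ultraN U L #>\<^bsub>prodgrp L\<^esub> z"
  using assms by (auto simp: ultra_carrier RCOSETS_def)


definition pu :: "nat set set \<Rightarrow> nat set set \<Rightarrow> nat set set" where
  "pu U1 U2 = {A. {i. {j. prod_encode (i,j) \<in> A} \<in> U2} \<in> U1}"

lemma pu_free:
  assumes U1: "free_ultrafilter U1" and U2: "free_ultrafilter U2"
  shows "free_ultrafilter (pu U1 U2)"
  unfolding free_ultrafilter_def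
proof (intro conjI allI impI)
  show "UNIV \<in> pu U1 U2" using fu_UNIV[OF U1] fu_UNIV[OF U2] by (simp add: pu_def)
  show "{} \<notin> pu U1 U2" using fu_empty[OF U1] fu_empty[OF U2] by (simp add: pu_def)
next
  fix A B assume "A \<in> pu U1 U2" "A \<subseteq> B"
  then show "B \<in> pu U1 U2" unfolding pu_def
    using fu_mono[OF U1] fu_mono[OF U2]
    by simp (smt (verit, ccfv_SIG) Collect_mono_iff in_mono)
next
  fix A B assume A: "A \<in> pu U1 U2" and B: "B \<in> pu U1 U2"
  have "{i. {j. prod_encode (i,j) \<in> A} \<in> U2} \<inter> {i. {j. prod_encode (i,j) \<in> B} \<in> U2}
        \<subseteq> {i. {j. prod_encode (i,j) \<in> A \<inter> B} \<in> U2}"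
    using fu_int[OF U2] by (auto simp: Collect_conj_eq)
  then show "A \<inter> B \<in> pu U1 U2" using A B fu_int[OF U1] fu_mono[OF U1]
    unfolding pu_def by blast
next
  fix A
  have "{i. {j. prod_encode (i,j) \<in> - A} \<in> U2} = - {i. {j. prod_encode (i,j) \<in> A} \<in> U2}"
  proof -
    have "\<And>i. ({j. prod_encode (i,j) \<in> - A} \<in> U2) = ({j. prod_encode (i,j) \<in> A} \<notin> U2)"
    proof -
      fix i
      have e: "{j. prod_encode (i,j) \<in> - A} = - {j. prod_encode (i,j) \<in> A}" by auto
      show "({j. prod_encode (i,j) \<in> - A} \<in> U2) = ({j. prod_encode (i,j) \<in> A} \<notin> U2)"
        unfolding e using fu_compl[OF U2] fu_int[OF U2] fu_empty[OF U2]
        by (metis Int_commute Compl_disjoint)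
    qed
    then show ?thesis by auto
  qed
  then show "A \<in> pu U1 U2 \<or> - A \<in> pu U1 U2" using fu_compl[OF U1] unfolding pu_def by simp
next
  fix A :: "nat set" assume fA: "finite A"
  have "\<And>i. {j. prod_encode (i,j) \<in> A} \<notin> U2"
  proof -
    fix i
    have "{j. prod_encode (i,j) \<in> A} = (\<lambda>j. prod_encode (i,j)) -` A" by auto
    moreover have "finite ((\<lambda>j. prod_encode (i,j)) -` A)"
      by (rule finite_vimageI[OF fA]) (auto simp: inj_def prod_encode_eq)
    ultimately show "{j. prod_encode (i,j) \<in> A} \<notin> U2" using fu_finite[OF U2] by simp
  qed
  then show "A \<notin> pu U1 U2" using fu_empty[OF U1] by (simp add: pu_def)
qed

lemma pu_rect:
  assumes U1: "free_ultrafilter U1" and U2: "free_ultrafilter U2"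
  shows "{n. P (fst (prod_decode n)) \<and> Q (snd (prod_decode n))} \<in> pu U1 U2
     \<longleftrightarrow> {i. P i} \<in> U1 \<and> {j. Q j} \<in> U2"
proof -
  have "{i. {j. prod_encode (i,j) \<in> {n. P (fst (prod_decode n)) \<and> Q (snd (prod_decode n))}} \<in> U2}
       = (if {j. Q j} \<in> U2 then {i. P i} else {})"
  proof -
    have "\<And>i. {j. P i \<and> Q j} = (if P i then {j. Q j} else {})" by auto
    then show ?thesis using fu_empty[OF U2] by auto
  qed
  then show ?thesis using fu_empty[OF U1] by (simp add: pu_def)
qed


definition pp :: "nat \<Rightarrow> nat \<Rightarrow> (nat \<Rightarrow> nat) \<Rightarrow> (nat \<Rightarrow> nat) \<Rightarrow> nat \<Rightarrow> nat" where
  "pp n1 n2 \<sigma> \<tau> k = (if k < n1 * n2 then \<sigma> (k mod n1) + n1 * \<tau> (k div n1) else k)"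

lemma enc_lt:
  fixes a b n1 n2 :: nat
  assumes "a < n1" "b < n2" shows "a + n1 * b < n1 * n2"
proof -
  have "a + n1 * b < n1 + n1 * b" using assms by simp
  also have "\<dots> = n1 * (b + 1)" by simp
  also have "\<dots> \<le> n1 * n2" using assms by (intro mult_le_mono2) simp
  finally show ?thesis .
qed

lemma enc_mod: "(a::nat) < n1 \<Longrightarrow> (a + n1 * b) mod n1 = a" by simp
lemma enc_div: "(a::nat) < n1 \<Longrightarrow> (a + n1 * b) div n1 = b" by simp

lemma dec_lt:
  fixes k n1 n2 :: nat
  assumes "k < n1 * n2" shows "k mod n1 < n1" "k div n1 < n2"
proof -
  have "n1 > 0" using assms by (cases n1) auto
  then show "k mod n1 < n1" by simp
  show "k div n1 < n2" using less_mult_imp_div_less[of k n2 n1] assms by (simp add: mult.commute)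
qed

lemma pp_id: "pp n1 n2 id id = id"
  by (auto simp: pp_def fun_eq_iff mod_mult_div_eq)

lemma pp_facts:
  assumes s: "\<And>a. a < n1 \<Longrightarrow> \<sigma> a < n1" and t: "\<And>b. b < n2 \<Longrightarrow> \<tau> b < n2" and k: "k < n1 * n2"
  shows "pp n1 n2 \<sigma> \<tau> k < n1 * n2" "pp n1 n2 \<sigma> \<tau> k mod n1 = \<sigma> (k mod n1)"
    "pp n1 n2 \<sigma> \<tau> k div n1 = \<tau> (k div n1)"
  using enc_lt[OF s[OF dec_lt(1)[OF k]] t[OF dec_lt(2)[OF k]]] s[OF dec_lt(1)[OF k]] k
  by (simp_all add: pp_def)

lemma pp_comp:
  assumes s: "\<And>a. a < n1 \<Longrightarrow> \<sigma>' a < n1" and t: "\<And>b. b < n2 \<Longrightarrow> \<tau>' b < n2"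
  shows "pp n1 n2 (\<sigma> \<circ> \<sigma>') (\<tau> \<circ> \<tau>') = pp n1 n2 \<sigma> \<tau> \<circ> pp n1 n2 \<sigma>' \<tau>'"
proof
  fix k show "pp n1 n2 (\<sigma> \<circ> \<sigma>') (\<tau> \<circ> \<tau>') k = (pp n1 n2 \<sigma> \<tau> \<circ> pp n1 n2 \<sigma>' \<tau>') k"
  proof (cases "k < n1 * n2")
    case True
    note f = pp_facts[OF s t True]
    show ?thesis using f True by (simp add: pp_def[of _ _ \<sigma> \<tau>]) (simp add: pp_def)
  next
    case False then show ?thesis by (simp add: pp_def)
  qed
qed

lemma perm_lt: "\<sigma> permutes {..<n} \<Longrightarrow> a < n \<Longrightarrow> \<sigma> a < n"
  using permutes_in_image[of \<sigma> "{..<n}" a] by simp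

lemma pp_permutes:
  assumes s: "\<sigma> permutes {..<n1}" and t: "\<tau> permutes {..<n2}"
  shows "pp n1 n2 \<sigma> \<tau> permutes {..<n1 * n2}"
proof -
  have si: "inv_into UNIV \<sigma> permutes {..<n1}" and ti: "inv_into UNIV \<tau> permutes {..<n2}" using s t by (simp_all add: permutes_inv)
  have "pp n1 n2 (inv_into UNIV \<sigma>) (inv_into UNIV \<tau>) \<circ> pp n1 n2 \<sigma> \<tau> = pp n1 n2 (inv_into UNIV \<sigma> \<circ> \<sigma>) (inv_into UNIV \<tau> \<circ> \<tau>)"
    by (rule pp_comp[symmetric]) (auto intro: perm_lt[OF s] perm_lt[OF t])
  also have "\<dots> = id" using permutes_inv_o(2)[OF s] permutes_inv_o(2)[OF t] pp_id by simp
  finally have 1: "pp n1 n2 (inv_into UNIV \<sigma>) (inv_into UNIV \<tau>) \<circ> pp n1 n2 \<sigma> \<tau> = id" .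
  have "pp n1 n2 \<sigma> \<tau> \<circ> pp n1 n2 (inv_into UNIV \<sigma>) (inv_into UNIV \<tau>) = pp n1 n2 (\<sigma> \<circ> inv_into UNIV \<sigma>) (\<tau> \<circ> inv_into UNIV \<tau>)"
    by (rule pp_comp[symmetric]) (auto intro: perm_lt[OF si] perm_lt[OF ti])
  also have "\<dots> = id" using permutes_inv_o(1)[OF s] permutes_inv_o(1)[OF t] pp_id by simp
  finally have 2: "pp n1 n2 \<sigma> \<tau> \<circ> pp n1 n2 (inv_into UNIV \<sigma>) (inv_into UNIV \<tau>) = id" .
  have "bij (pp n1 n2 \<sigma> \<tau>)" using o_bij[OF 1 2] .
  then show ?thesis unfolding permutes_def bij_iff by (auto simp: pp_def)
qed

lemma card_rect:
  fixes n1 n2 :: nat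
  shows "card {k. k < n1 * n2 \<and> P (k mod n1) \<and> Q (k div n1)} = card {a. a < n1 \<and> P a} * card {b. b < n2 \<and> Q b}"
proof -
  let ?f = "\<lambda>(a, b). a + n1 * b"
  have e: "{k. k < n1 * n2 \<and> P (k mod n1) \<and> Q (k div n1)} = ?f ` ({a. a < n1 \<and> P a} \<times> {b. b < n2 \<and> Q b})"
  proof (intro equalityI subsetI)
    fix k assume "k \<in> {k. k < n1 * n2 \<and> P (k mod n1) \<and> Q (k div n1)}"
    then have k: "k < n1 * n2" "P (k mod n1)" "Q (k div n1)" by auto
    then have "k = ?f (k mod n1, k div n1)" by (simp add: mod_mult_div_eq)
    moreover have "(k mod n1, k div n1) \<in> {a. a < n1 \<and> P a} \<times> {b. b < n2 \<and> Q b}"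
      using k dec_lt[OF k(1)] by simp
    ultimately show "k \<in> ?f ` ({a. a < n1 \<and> P a} \<times> {b. b < n2 \<and> Q b})" by blast
  next
    fix k assume "k \<in> ?f ` ({a. a < n1 \<and> P a} \<times> {b. b < n2 \<and> Q b})"
    then obtain a b where "a < n1" "P a" "b < n2" "Q b" "k = a + n1 * b" by auto
    then show "k \<in> {k. k < n1 * n2 \<and> P (k mod n1) \<and> Q (k div n1)}"
      using enc_lt[of a n1 b n2] by simp
  qed
  have i: "inj_on ?f ({a. a < n1 \<and> P a} \<times> {b. b < n2 \<and> Q b})"
  proof (rule inj_onI, clarify)
    fix a b a' b' assume "a < n1" "a' < n1" and eq: "a + n1 * b = a' + n1 * b'"
    then have "(a + n1 * b) mod n1 = (a' + n1 * b') mod n1" "(a + n1 * b) div n1 = (a' + n1 * b') div n1"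
      by simp_all
    then show "a = a' \<and> b = b'" using \<open>a < n1\<close> \<open>a' < n1\<close> by simp
  qed
  show ?thesis unfolding e card_image[OF i] card_cartesian_product ..
qed

lemma ham_pp_upper:
  assumes n: "n1 > 0" "n2 > 0"
    and s: "\<And>a. a < n1 \<Longrightarrow> \<sigma> a < n1" and t: "\<And>b. b < n2 \<Longrightarrow> \<tau> b < n2"
  shows "hamming (n1 * n2) (pp n1 n2 \<sigma> \<tau>) (pp n1 n2 \<sigma>' \<tau>') \<le> hamming n1 \<sigma> \<sigma>' + hamming n2 \<tau> \<tau>'"
proof -
  let ?A = "{k. k < n1 * n2 \<and> \<sigma> (k mod n1) \<noteq> \<sigma>' (k mod n1) \<and> True}"
  let ?B = "{k. k < n1 * n2 \<and> True \<and> \<tau> (k div n1) \<noteq> \<tau>' (k div n1)}"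
  have sub: "{i. i < n1 * n2 \<and> pp n1 n2 \<sigma> \<tau> i \<noteq> pp n1 n2 \<sigma>' \<tau>' i} \<subseteq> ?A \<union> ?B"
  proof
    fix i assume "i \<in> {i. i < n1 * n2 \<and> pp n1 n2 \<sigma> \<tau> i \<noteq> pp n1 n2 \<sigma>' \<tau>' i}"
    then have i: "i < n1 * n2" "pp n1 n2 \<sigma> \<tau> i \<noteq> pp n1 n2 \<sigma>' \<tau>' i" by simp_all
    have "\<sigma> (i mod n1) \<noteq> \<sigma>' (i mod n1) \<or> \<tau> (i div n1) \<noteq> \<tau>' (i div n1)"
    proof (rule ccontr)
      assume "\<not> ?thesis"
      then have "pp n1 n2 \<sigma> \<tau> i = pp n1 n2 \<sigma>' \<tau>' i" unfolding pp_def by simp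
      then show False using i(2) by contradiction
    qed
    then show "i \<in> ?A \<union> ?B" using i(1) by blast
  qed
  have "card {i. i < n1 * n2 \<and> pp n1 n2 \<sigma> \<tau> i \<noteq> pp n1 n2 \<sigma>' \<tau>' i} \<le> card (?A \<union> ?B)"
    by (rule card_mono[OF _ sub]) simp
  also have "\<dots> \<le> card ?A + card ?B" by (rule card_Un_le)
  also have "\<dots> = card {a. a < n1 \<and> \<sigma> a \<noteq> \<sigma>' a} * n2 + n1 * card {b. b < n2 \<and> \<tau> b \<noteq> \<tau>' b}"
    using card_rect[of n1 n2 "\<lambda>a. \<sigma> a \<noteq> \<sigma>' a" "\<lambda>_. True"] card_rect[of n1 n2 "\<lambda>_. True" "\<lambda>b. \<tau> b \<noteq> \<tau>' b"] by simp
  finally have c: "real (card {i. i < n1 * n2 \<and> pp n1 n2 \<sigma> \<tau> i \<noteq> pp n1 n2 \<sigma>' \<tau>' i})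
      \<le> real (card {a. a < n1 \<and> \<sigma> a \<noteq> \<sigma>' a}) * real n2 + real n1 * real (card {b. b < n2 \<and> \<tau> b \<noteq> \<tau>' b})"
    by (simp only: of_nat_add[symmetric] of_nat_mult[symmetric] of_nat_le_iff)
  have "hamming (n1 * n2) (pp n1 n2 \<sigma> \<tau>) (pp n1 n2 \<sigma>' \<tau>') \<le>
     (real (card {a. a < n1 \<and> \<sigma> a \<noteq> \<sigma>' a}) * real n2 + real n1 * real (card {b. b < n2 \<and> \<tau> b \<noteq> \<tau>' b})) / (real n1 * real n2)"
    unfolding hamming_def of_nat_mult using c n by (intro divide_right_mono) simp_all
  also have "\<dots> = hamming n1 \<sigma> \<sigma>' + hamming n2 \<tau> \<tau>'"
    unfolding hamming_def using n by (simp add: field_simps)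
  finally show ?thesis .
qed

lemma ham_pp_lower:
  assumes n: "n1 > 0" "n2 > 0"
    and s: "\<And>a. a < n1 \<Longrightarrow> \<sigma> a < n1" and t: "\<And>b. b < n2 \<Longrightarrow> \<tau> b < n2"
  shows "hamming n1 \<sigma> id \<le> hamming (n1 * n2) (pp n1 n2 \<sigma> \<tau>) id"
    "hamming n2 \<tau> id \<le> hamming (n1 * n2) (pp n1 n2 \<sigma> \<tau>) id"
proof -
  let ?S = "{i. i < n1 * n2 \<and> pp n1 n2 \<sigma> \<tau> i \<noteq> id i}"
  let ?A = "{k. k < n1 * n2 \<and> \<sigma> (k mod n1) \<noteq> k mod n1 \<and> True}"
  let ?B = "{k. k < n1 * n2 \<and> True \<and> \<tau> (k div n1) \<noteq> k div n1}"
  have subA: "?A \<subseteq> ?S"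
  proof
    fix k assume "k \<in> ?A"
    then have k: "k < n1 * n2" "\<sigma> (k mod n1) \<noteq> k mod n1" by auto
    have "pp n1 n2 \<sigma> \<tau> k \<noteq> k" using pp_facts(2)[where \<sigma>=\<sigma> and \<tau>=\<tau>, OF s t k(1)] k(2) by metis
    then show "k \<in> ?S" using k(1) by simp
  qed
  have subB: "?B \<subseteq> ?S"
  proof
    fix k assume "k \<in> ?B"
    then have k: "k < n1 * n2" "\<tau> (k div n1) \<noteq> k div n1" by auto
    have "pp n1 n2 \<sigma> \<tau> k \<noteq> k" using pp_facts(3)[where \<sigma>=\<sigma> and \<tau>=\<tau>, OF s t k(1)] k(2) by metis
    then show "k \<in> ?S" using k(1) by simp
  qed
  have cA: "card {a. a < n1 \<and> \<sigma> a \<noteq> id a} * n2 \<le> card ?S"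
    using card_mono[OF _ subA] card_rect[of n1 n2 "\<lambda>a. \<sigma> a \<noteq> a" "\<lambda>_. True"] by simp
  have cB: "n1 * card {b. b < n2 \<and> \<tau> b \<noteq> id b} \<le> card ?S"
    using card_mono[OF _ subB] card_rect[of n1 n2 "\<lambda>_. True" "\<lambda>b. \<tau> b \<noteq> b"] by simp
  have "real (card {a. a < n1 \<and> \<sigma> a \<noteq> id a}) * real n2 \<le> real (card ?S)"
    using cA by (simp only: of_nat_mult[symmetric] of_nat_le_iff)
  then show "hamming n1 \<sigma> id \<le> hamming (n1 * n2) (pp n1 n2 \<sigma> \<tau>) id"
    unfolding hamming_def using n by (simp add: field_simps)
  have "real n1 * real (card {b. b < n2 \<and> \<tau> b \<noteq> id b}) \<le> real (card ?S)"
    using cB by (simp only: of_nat_mult[symmetric] of_nat_le_iff)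
  then show "hamming n2 \<tau> id \<le> hamming (n1 * n2) (pp n1 n2 \<sigma> \<tau>) id"
    unfolding hamming_def using n by (simp add: field_simps)
qed

lemma sofic_prod:
  assumes G1: "group G1" and G2: "group G2" and S1: "sofic G1" and S2: "sofic G2"
  shows "sofic (G1 \<times>\<times> G2)"
  unfolding sofic_def
proof (intro allI impI)
  fix F and \<epsilon> :: real
  assume F: "finite F" and sub: "F \<subseteq> carrier (G1 \<times>\<times> G2)" and e: "\<epsilon> > 0"
  have f1: "finite (fst ` F)" and f2: "finite (snd ` F)" using F by simp_all
  have s1: "fst ` F \<subseteq> carrier G1" and s2: "snd ` F \<subseteq> carrier G2" using sub by auto
  have e2: "\<epsilon> / 2 > 0" using e by simp
  obtain n1 \<phi>1 where n1: "n1 > 0" and p1: "\<forall>g \<in> carrier G1. \<phi>1 g permutes {..<n1}"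
    and o1: "\<phi>1 \<one>\<^bsub>G1\<^esub> = id"
    and m1: "\<forall>g\<in>fst ` F. \<forall>h\<in>fst ` F. hamming n1 (\<phi>1 (g \<otimes>\<^bsub>G1\<^esub> h)) (\<phi>1 g \<circ> \<phi>1 h) < \<epsilon> / 2"
    and d1: "\<forall>g\<in>fst ` F. g \<noteq> \<one>\<^bsub>G1\<^esub> \<longrightarrow> hamming n1 (\<phi>1 g) id > 1 - \<epsilon> / 2"
    using S1[unfolded sofic_def, rule_format, OF f1 s1 e2]
    apply (elim exE conjE) apply (rule that) apply assumption+ done
  obtain n2 \<phi>2 where n2: "n2 > 0" and p2: "\<forall>g \<in> carrier G2. \<phi>2 g permutes {..<n2}"
    and o2: "\<phi>2 \<one>\<^bsub>G2\<^esub> = id"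
    and m2: "\<forall>g\<in>snd ` F. \<forall>h\<in>snd ` F. hamming n2 (\<phi>2 (g \<otimes>\<^bsub>G2\<^esub> h)) (\<phi>2 g \<circ> \<phi>2 h) < \<epsilon> / 2"
    and d2: "\<forall>g\<in>snd ` F. g \<noteq> \<one>\<^bsub>G2\<^esub> \<longrightarrow> hamming n2 (\<phi>2 g) id > 1 - \<epsilon> / 2"
    using S2[unfolded sofic_def, rule_format, OF f2 s2 e2]
    apply (elim exE conjE) apply (rule that) apply assumption+ done
  define \<phi> where "\<phi> = (\<lambda>p. pp n1 n2 (\<phi>1 (fst p)) (\<phi>2 (snd p)))"
  have lt1: "\<And>g a. g \<in> carrier G1 \<Longrightarrow> a < n1 \<Longrightarrow> \<phi>1 g a < n1"
    using p1 perm_lt by blast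
  have lt2: "\<And>g a. g \<in> carrier G2 \<Longrightarrow> a < n2 \<Longrightarrow> \<phi>2 g a < n2"
    using p2 perm_lt by blast
  have mc1: "\<And>g h. g \<in> carrier G1 \<Longrightarrow> h \<in> carrier G1 \<Longrightarrow> g \<otimes>\<^bsub>G1\<^esub> h \<in> carrier G1"
    using G1 by (simp add: group.is_monoid monoid.m_closed)
  have mc2: "\<And>g h. g \<in> carrier G2 \<Longrightarrow> h \<in> carrier G2 \<Longrightarrow> g \<otimes>\<^bsub>G2\<^esub> h \<in> carrier G2"
    using G2 by (simp add: group.is_monoid monoid.m_closed)
  show "\<exists>n \<phi>. 0 < n \<and> (\<forall>g\<in>carrier (G1 \<times>\<times> G2). \<phi> g permutes {..<n}) \<and>
            \<phi> \<one>\<^bsub>G1 \<times>\<times> G2\<^esub> = id \<and>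
            (\<forall>g\<in>F. \<forall>h\<in>F. hamming n (\<phi> (g \<otimes>\<^bsub>G1 \<times>\<times> G2\<^esub> h)) (\<phi> g \<circ> \<phi> h) < \<epsilon>) \<and>
            (\<forall>g\<in>F. g \<noteq> \<one>\<^bsub>G1 \<times>\<times> G2\<^esub> \<longrightarrow> 1 - \<epsilon> < hamming n (\<phi> g) id)"
  proof (rule exI[of _ "n1 * n2"], rule exI[of _ \<phi>], intro conjI ballI impI)
    show "0 < n1 * n2" using n1 n2 by simp
  next
    fix g assume "g \<in> carrier (G1 \<times>\<times> G2)"
    then have "fst g \<in> carrier G1" "snd g \<in> carrier G2" by auto
    then show "\<phi> g permutes {..<n1 * n2}" unfolding \<phi>_def using p1 p2 by (intro pp_permutes) auto
  next
    show "\<phi> \<one>\<^bsub>G1 \<times>\<times> G2\<^esub> = id" unfolding \<phi>_def using o1 o2 pp_id by simp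
  next
    fix g h assume g: "g \<in> F" and h: "h \<in> F"
    have gc: "fst g \<in> carrier G1" "snd g \<in> carrier G2" using g sub by auto
    have hc: "fst h \<in> carrier G1" "snd h \<in> carrier G2" using h sub by auto
    have "\<phi> g \<circ> \<phi> h = pp n1 n2 (\<phi>1 (fst g) \<circ> \<phi>1 (fst h)) (\<phi>2 (snd g) \<circ> \<phi>2 (snd h))"
      unfolding \<phi>_def by (rule pp_comp[symmetric]) (auto intro: lt1[OF hc(1)] lt2[OF hc(2)])
    moreover have "\<phi> (g \<otimes>\<^bsub>G1 \<times>\<times> G2\<^esub> h) = pp n1 n2 (\<phi>1 (fst g \<otimes>\<^bsub>G1\<^esub> fst h)) (\<phi>2 (snd g \<otimes>\<^bsub>G2\<^esub> snd h))"
      unfolding \<phi>_def mult_DirProd' by simp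
    ultimately have "hamming (n1 * n2) (\<phi> (g \<otimes>\<^bsub>G1 \<times>\<times> G2\<^esub> h)) (\<phi> g \<circ> \<phi> h) \<le>
        hamming n1 (\<phi>1 (fst g \<otimes>\<^bsub>G1\<^esub> fst h)) (\<phi>1 (fst g) \<circ> \<phi>1 (fst h)) +
        hamming n2 (\<phi>2 (snd g \<otimes>\<^bsub>G2\<^esub> snd h)) (\<phi>2 (snd g) \<circ> \<phi>2 (snd h))"
      using ham_pp_upper[OF n1 n2, where \<sigma>="\<phi>1 (fst g \<otimes>\<^bsub>G1\<^esub> fst h)" and \<tau>="\<phi>2 (snd g \<otimes>\<^bsub>G2\<^esub> snd h)"]
        lt1[OF mc1[OF gc(1) hc(1)]] lt2[OF mc2[OF gc(2) hc(2)]] by simp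
    also have "\<dots> < \<epsilon> / 2 + \<epsilon> / 2"
      using m1 m2 g h by (intro add_strict_mono) auto
    finally show "hamming (n1 * n2) (\<phi> (g \<otimes>\<^bsub>G1 \<times>\<times> G2\<^esub> h)) (\<phi> g \<circ> \<phi> h) < \<epsilon>" by simp
  next
    fix g assume g: "g \<in> F" and ne: "g \<noteq> \<one>\<^bsub>G1 \<times>\<times> G2\<^esub>"
    have gc: "fst g \<in> carrier G1" "snd g \<in> carrier G2" using g sub by auto
    note lo = ham_pp_lower[OF n1 n2, where \<sigma>="\<phi>1 (fst g)" and \<tau>="\<phi>2 (snd g)", OF lt1[OF gc(1)] lt2[OF gc(2)]]
    have "fst g \<noteq> \<one>\<^bsub>G1\<^esub> \<or> snd g \<noteq> \<one>\<^bsub>G2\<^esub>" using ne by (cases g) auto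
    then have "1 - \<epsilon> / 2 < hamming (n1 * n2) (pp n1 n2 (\<phi>1 (fst g)) (\<phi>2 (snd g))) id"
    proof
      assume "fst g \<noteq> \<one>\<^bsub>G1\<^esub>"
      then have "1 - \<epsilon> / 2 < hamming n1 (\<phi>1 (fst g)) id" using d1 g by auto
      then show ?thesis using lo(1) by linarith
    next
      assume "snd g \<noteq> \<one>\<^bsub>G2\<^esub>"
      then have "1 - \<epsilon> / 2 < hamming n2 (\<phi>2 (snd g)) id" using d2 g by auto
      then show ?thesis using lo(2) by linarith
    qed
    then show "1 - \<epsilon> < hamming (n1 * n2) (\<phi> g) id" unfolding \<phi>_def using e by linarith
  qed
qed


locale fm =
  fixes XS :: "'a set" and m :: "'a set \<Rightarrow> real"
  assumes nn: "A \<subseteq> XS \<Longrightarrow> 0 \<le> m A"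
    and tot: "m XS = 1"
    and add: "A \<subseteq> XS \<Longrightarrow> B \<subseteq> XS \<Longrightarrow> A \<inter> B = {} \<Longrightarrow> m (A \<union> B) = m A + m B"
begin

lemma m_empty: "m {} = 0"
  using add[of "{}" "{}"] by simp

lemma m_mono: "A \<subseteq> B \<Longrightarrow> B \<subseteq> XS \<Longrightarrow> m A \<le> m B"
proof -
  assume AB: "A \<subseteq> B" and B: "B \<subseteq> XS"
  have "m B = m (A \<union> (B - A))" using AB by (simp add: Un_absorb1)
  also have "\<dots> = m A + m (B - A)" using AB B by (intro add) auto
  also have "\<dots> \<ge> m A" using nn[of "B - A"] B by auto
  finally show "m A \<le> m B" .
qed

lemma m_le1: "A \<subseteq> XS \<Longrightarrow> m A \<le> 1"
  using m_mono[of A XS] tot by simp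

definition J :: "nat \<Rightarrow> ('a \<Rightarrow> nat) \<Rightarrow> real" where
  "J B u = (\<Sum>j<B. m {x\<in>XS. j < u x})"

lemma J_cong: "(\<And>x. x \<in> XS \<Longrightarrow> u x = v x) \<Longrightarrow> J B u = J B v"
  unfolding J_def by (intro sum.cong refl arg_cong[where f=m]) auto

lemma J_mono: "(\<And>x. x \<in> XS \<Longrightarrow> u x \<le> v x) \<Longrightarrow> J B u \<le> J B v"
  unfolding J_def by (intro sum_mono m_mono) (auto intro: less_le_trans)

lemma J_nonneg: "0 \<le> J B u"
  unfolding J_def by (intro sum_nonneg nn) auto

lemma J_ext:
  assumes "\<And>x. x \<in> XS \<Longrightarrow> u x \<le> B" 
  shows "J (B + d) u = J B u"
proof (induction d)
  case 0 then show ?case by simp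
next
  case (Suc d)
  have e: "{x\<in>XS. B + d < u x} = {}" using assms by force
  have "J (B + Suc d) u = J (B + d) u + m {x\<in>XS. B + d < u x}" unfolding J_def by simp
  also have "\<dots> = J (B + d) u" unfolding e m_empty by simp
  finally show ?case using Suc.IH by simp
qed

lemma J_ext': "(\<And>x. x \<in> XS \<Longrightarrow> u x \<le> B) \<Longrightarrow> B \<le> B' \<Longrightarrow> J B' u = J B u"
  using J_ext[of u B "B' - B"] by simp

lemma J_const: "c \<le> B \<Longrightarrow> J B (\<lambda>_. c) = real c"
proof -
  assume c: "c \<le> B"
  have "J B (\<lambda>_. c) = J c (\<lambda>_. c)" by (rule J_ext'[OF _ c]) simp
  also have "\<dots> = real c" unfolding J_def using tot by simp
  finally show ?thesis .
qed

lemma sum_level: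
  fixes w :: "'a \<Rightarrow> nat" and B :: nat
  assumes that: "E \<subseteq> XS"
  shows "(\<Sum>j<B. m {x\<in>E. w x = j}) = m {x\<in>E. w x < B}"
proof (induction B)
  case 0 then show ?case by (simp add: m_empty)
next
  case (Suc B)
  have "{x\<in>E. w x < Suc B} = {x\<in>E. w x < B} \<union> {x\<in>E. w x = B}" by auto
  then have "m {x\<in>E. w x < Suc B} = m {x\<in>E. w x < B} + m {x\<in>E. w x = B}"
    using that by (simp add: add subset_iff disjoint_iff)
  then show ?case using Suc by simp
qed

lemma J_ind:
  assumes E: "E \<subseteq> XS" and b: "\<And>x. x \<in> XS \<Longrightarrow> w x + (if x \<in> E then 1 else 0) \<le> B"
  shows "J B (\<lambda>x. w x + (if x \<in> E then 1 else 0)) = J B w + m E"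
proof -
  have e: "\<And>j. {x\<in>XS. j < w x + (if x \<in> E then 1 else 0)} = {x\<in>XS. j < w x} \<union> {x\<in>E. w x = j}"
    using E by auto
  have t: "\<And>j. m {x\<in>XS. j < w x + (if x \<in> E then 1 else 0)} = m {x\<in>XS. j < w x} + m {x\<in>E. w x = j}"
    unfolding e using E by (intro add) auto
  have "J B (\<lambda>x. w x + (if x \<in> E then 1 else 0)) = J B w + (\<Sum>j<B. m {x\<in>E. w x = j})"
    unfolding J_def t by (simp add: sum.distrib)
  also have "(\<Sum>j<B. m {x\<in>E. w x = j}) = m {x\<in>E. w x < B}" using sum_level[OF E] .
  also have "{x\<in>E. w x < B} = E"
  proof -
    have "\<And>x. x \<in> E \<Longrightarrow> w x < B"
    proof -
      fix x assume x: "x \<in> E"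
      then have "x \<in> XS" using E by blast
      then have "w x + (if x \<in> E then 1 else 0) \<le> B" by (rule b)
      then show "w x < B" using x by simp
    qed
    then show ?thesis by auto
  qed
  finally show ?thesis .
qed

lemma J_add_aux:
  "\<forall>u v. (\<forall>x\<in>XS. v x \<le> b) \<longrightarrow> (\<forall>x\<in>XS. u x + v x \<le> B) \<longrightarrow> J B (\<lambda>x. u x + v x) = J B u + J B v"
proof (induction b)
  case 0
  show ?case
  proof (intro allI impI)
    fix u v :: "'a \<Rightarrow> nat" assume v: "\<forall>x\<in>XS. v x \<le> 0"
    have "J B (\<lambda>x. u x + v x) = J B u" using v by (intro J_cong) auto
    moreover have "J B v = J B (\<lambda>_. 0)" using v by (intro J_cong) auto
    ultimately show "J B (\<lambda>x. u x + v x) = J B u + J B v" using J_const[of 0 B] by simp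
  qed
next
  case (Suc b)
  show ?case
  proof (intro allI impI)
    fix u v :: "'a \<Rightarrow> nat" assume v: "\<forall>x\<in>XS. v x \<le> Suc b" and uv: "\<forall>x\<in>XS. u x + v x \<le> B"
    define E where "E = {x\<in>XS. 0 < v x}"
    define v' where "v' = (\<lambda>x. v x - 1)"
    have E: "E \<subseteq> XS" by (auto simp: E_def)
    have dec: "\<And>x. x \<in> XS \<Longrightarrow> v x = v' x + (if x \<in> E then 1 else 0)" by (auto simp: E_def v'_def)
    have v'b: "\<forall>x\<in>XS. v' x \<le> b" using v by (auto simp: v'_def)
    have c1: "\<forall>x\<in>XS. (u x + (if x \<in> E then 1 else 0)) + v' x \<le> B"
    proof
      fix x assume x: "x \<in> XS"
      show "(u x + (if x \<in> E then 1 else 0)) + v' x \<le> B" using dec[OF x] bspec[OF uv x] by simp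
    qed
    have c2: "\<And>x. x \<in> XS \<Longrightarrow> u x + (if x \<in> E then 1 else 0) \<le> B"
      using c1 by fastforce
    have c3: "\<And>x. x \<in> XS \<Longrightarrow> v' x + (if x \<in> E then 1 else 0) \<le> B"
    proof -
      fix x assume x: "x \<in> XS"
      show "v' x + (if x \<in> E then 1 else 0) \<le> B" using dec[OF x] bspec[OF uv x] by simp
    qed
    have "J B (\<lambda>x. u x + v x) = J B (\<lambda>x. (u x + (if x \<in> E then 1 else 0)) + v' x)"
      using dec by (intro J_cong) simp
    also have "\<dots> = J B (\<lambda>x. u x + (if x \<in> E then 1 else 0)) + J B v'"
      by (rule Suc.IH[rule_format, of v' "\<lambda>x. u x + (if x \<in> E then 1 else 0)", OF v'b[rule_format] c1[rule_format]])
    also have "J B (\<lambda>x. u x + (if x \<in> E then 1 else 0)) = J B u + m E"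
      by (rule J_ind[OF E c2])
    finally have h1: "J B (\<lambda>x. u x + v x) = J B u + m E + J B v'" .
    have "J B v = J B (\<lambda>x. v' x + (if x \<in> E then 1 else 0))"
      using dec by (intro J_cong) simp
    also have "\<dots> = J B v' + m E"
      by (rule J_ind[OF E c3])
    finally have h2: "J B v = J B v' + m E" .
    show "J B (\<lambda>x. u x + v x) = J B u + J B v" using h1 h2 by simp
  qed
qed

lemma J_add:
  assumes "\<And>x. x \<in> XS \<Longrightarrow> u x + v x \<le> B"
  shows "J B (\<lambda>x. u x + v x) = J B u + J B v"
proof -
  have "\<forall>x\<in>XS. v x \<le> B" using assms by (meson add_leD2)
  moreover have "\<forall>x\<in>XS. u x + v x \<le> B" using assms by blast
  ultimately show ?thesis using J_add_aux[of B B] by blast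
qed

lemma J_mult:
  assumes "\<And>x. x \<in> XS \<Longrightarrow> k * u x \<le> B"
  shows "J B (\<lambda>x. k * u x) = real k * J B u"
  using assms
proof (induction k)
  case 0 then show ?case using J_const[of 0 B] by simp
next
  case (Suc k)
  have "J B (\<lambda>x. Suc k * u x) = J B (\<lambda>x. u x + k * u x)" by simp
  also have "\<dots> = J B u + J B (\<lambda>x. k * u x)" using Suc.prems by (intro J_add) simp
  also have "J B (\<lambda>x. k * u x) = real k * J B u" proof (rule Suc.IH)
    fix x assume "x \<in> XS"
    have "k * u x \<le> Suc k * u x" by simp
    then show "k * u x \<le> B" using Suc.prems[OF \<open>x \<in> XS\<close>] by linarith
  qed
  finally show ?case by (simp add: algebra_simps)
qed

definition fl :: "nat \<Rightarrow> ('a \<Rightarrow> real) \<Rightarrow> 'a \<Rightarrow> nat" where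
  "fl N f x = nat \<lfloor>real N * f x\<rfloor>"

definition Lf :: "nat \<Rightarrow> ('a \<Rightarrow> real) \<Rightarrow> real" where
  "Lf N f = J N (fl N f) / real N"

definition Mf :: "('a \<Rightarrow> real) \<Rightarrow> real" where
  "Mf f = (SUP n. Lf (Suc n) f)"

lemma fl_le: "0 \<le> y \<Longrightarrow> y \<le> 1 \<Longrightarrow> fl N (\<lambda>_. y) x \<le> N"
proof -
  assume "0 \<le> y" "y \<le> 1"
  then have "real N * y \<le> real N" by (simp add: mult_left_le)
  then have "\<lfloor>real N * y\<rfloor> \<le> int N" by (metis floor_mono floor_of_nat)
  then show ?thesis unfolding fl_def by simp
qed

lemma fl_le': "0 \<le> f x \<Longrightarrow> f x \<le> 1 \<Longrightarrow> fl N f x \<le> N"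
  using fl_le[of "f x" N x] by (simp add: fl_def)

lemma fl_low: "0 \<le> f x \<Longrightarrow> real (fl N f x) \<le> real N * f x"
  unfolding fl_def by simp

lemma fl_up: "0 \<le> f x \<Longrightarrow> real N * f x < real (fl N f x) + 1"
  unfolding fl_def by (simp add: of_nat_nat)

lemma fl_int: "real c \<le> real N * f x \<Longrightarrow> c \<le> fl N f x"
  unfolding fl_def by (simp add: le_nat_floor le_floor_iff)

lemma Lf_nonneg: "0 \<le> Lf N f"
  unfolding Lf_def using J_nonneg by simp

lemma Lf_mult_lower:
  assumes N: "N > 0" and k: "k > 0" and f0: "\<And>x. x \<in> XS \<Longrightarrow> 0 \<le> f x" and f1: "\<And>x. x \<in> XS \<Longrightarrow> f x \<le> 1"
  shows "Lf N f \<le> Lf (k * N) f"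
proof -
  have flN: "\<And>x. x \<in> XS \<Longrightarrow> fl N f x \<le> N" using fl_le' f0 f1 by blast
  have "real k * J N (fl N f) = real k * J (k * N) (fl N f)"
    using J_ext'[of "fl N f" N "k * N"] flN k by simp
  also have "\<dots> = J (k * N) (\<lambda>x. k * fl N f x)"
    using flN by (intro J_mult[symmetric]) simp
  also have "\<dots> \<le> J (k * N) (fl (k * N) f)"
  proof (rule J_mono)
    fix x assume x: "x \<in> XS"
    have "real (k * fl N f x) = real k * real (fl N f x)" by simp
    also have "\<dots> \<le> real k * (real N * f x)" using fl_low[where f=f and x=x, OF f0[OF x]] by (intro mult_left_mono) simp_all
    also have "\<dots> = real (k * N) * f x" by simp
    finally show "k * fl N f x \<le> fl (k * N) f x" by (rule fl_int)
  qed
  finally have "real k * J N (fl N f) \<le> J (k * N) (fl (k * N) f)" .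
  then show ?thesis unfolding Lf_def using N k by (simp add: field_simps)
qed

lemma Lf_mult_upper:
  assumes N: "N > 0" and k: "k > 0" and f0: "\<And>x. x \<in> XS \<Longrightarrow> 0 \<le> f x" and f1: "\<And>x. x \<in> XS \<Longrightarrow> f x \<le> 1"
  shows "Lf (k * N) f \<le> Lf N f + 1 / real N"
proof -
  define B where "B = k * N + k"
  have flN: "\<And>x. x \<in> XS \<Longrightarrow> fl N f x \<le> N" using fl_le' f0 f1 by blast
  have flkN: "\<And>x. x \<in> XS \<Longrightarrow> fl (k * N) f x \<le> k * N" using fl_le' f0 f1 by blast
  have "J (k * N) (fl (k * N) f) = J B (fl (k * N) f)"
    using flkN by (intro J_ext'[symmetric]) (auto simp: B_def)
  also have "\<dots> \<le> J B (\<lambda>x. k * (fl N f x + 1))"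
  proof (rule J_mono)
    fix x assume x: "x \<in> XS"
    have "real (fl (k * N) f x) \<le> real k * (real N * f x)" using fl_low[where f=f and x=x and N="k * N", OF f0[OF x]] by simp
    also have "\<dots> < real k * (real (fl N f x) + 1)" using fl_up[where f=f and x=x and N=N, OF f0[OF x]] k by simp
    also have "\<dots> = real (k * (fl N f x + 1))" by (simp add: algebra_simps)
    finally have "fl (k * N) f x < k * (fl N f x + 1)" by (simp only: of_nat_less_iff)
    then show "fl (k * N) f x \<le> k * (fl N f x + 1)" by simp
  qed
  also have "\<dots> = real k * J B (\<lambda>x. fl N f x + 1)"
    using flN by (intro J_mult) (auto simp: B_def)
  also have "J B (\<lambda>x. fl N f x + 1) = J B (fl N f) + J B (\<lambda>_. 1)"
  proof (rule J_add)
    have "1 * (N + 1) \<le> k * (N + 1)" using k by (intro mult_le_mono1) simp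
    then have kb: "N + 1 \<le> B" by (simp add: B_def algebra_simps)
    fix x assume "x \<in> XS"
    then show "fl N f x + 1 \<le> B" using flN kb by fastforce
  qed
  also have "J B (\<lambda>_. 1) = 1" using J_const[of 1 B] k N by (simp add: B_def)
  also have "J B (fl N f) = J N (fl N f)"
  proof (rule J_ext')
    show "N \<le> B" using k by (cases k) (auto simp: B_def)
  qed (rule flN)
  finally have "J (k * N) (fl (k * N) f) \<le> real k * (J N (fl N f) + 1)" .
  then show ?thesis unfolding Lf_def using N k by (simp add: field_simps)
qed

lemma Lf_cross:
  assumes N: "N > 0" and N': "N' > 0" and f0: "\<And>x. x \<in> XS \<Longrightarrow> 0 \<le> f x" and f1: "\<And>x. x \<in> XS \<Longrightarrow> f x \<le> 1"
  shows "Lf N' f \<le> Lf N f + 1 / real N"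
proof -
  have "Lf N' f \<le> Lf (N * N') f" by (rule Lf_mult_lower[OF N' N f0 f1])
  also have "\<dots> = Lf (N' * N) f" by (simp add: mult.commute)
  also have "\<dots> \<le> Lf N f + 1 / real N" by (rule Lf_mult_upper[OF N N' f0 f1])
  finally show ?thesis .
qed

lemma Mf_bounds:
  assumes N: "N > 0" and f0: "\<And>x. x \<in> XS \<Longrightarrow> 0 \<le> f x" and f1: "\<And>x. x \<in> XS \<Longrightarrow> f x \<le> 1"
  shows "Lf N f \<le> Mf f" "Mf f \<le> Lf N f + 1 / real N"
proof -
  have bd: "\<And>n. Lf (Suc n) f \<le> Lf 1 f + 1 / real (1::nat)"
    by (rule Lf_cross[where f=f, OF zero_less_one _ f0 f1]) simp
  have bdd: "bdd_above (range (\<lambda>n. Lf (Suc n) f))"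
    using bd by (intro bdd_aboveI2) simp
  have "Lf (Suc (N - 1)) f \<le> Mf f" unfolding Mf_def by (rule cSUP_upper[OF UNIV_I bdd])
  then show "Lf N f \<le> Mf f" using N by simp
  show "Mf f \<le> Lf N f + 1 / real N" unfolding Mf_def
    by (rule cSUP_least) (auto intro: Lf_cross[where f=f, OF N _ f0 f1])
qed

lemma Lf_add_lower:
  assumes N: "N > 0" and f0: "\<And>x. x \<in> XS \<Longrightarrow> 0 \<le> f x" and g0: "\<And>x. x \<in> XS \<Longrightarrow> 0 \<le> g x"
    and fg1: "\<And>x. x \<in> XS \<Longrightarrow> f x + g x \<le> 1"
  shows "Lf N f + Lf N g \<le> Lf N (\<lambda>x. f x + g x)"
proof -
  have le: "\<And>x. x \<in> XS \<Longrightarrow> fl N f x + fl N g x \<le> fl N (\<lambda>x. f x + g x) x"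
  proof -
    fix x assume x: "x \<in> XS"
    have "real (fl N f x + fl N g x) \<le> real N * f x + real N * g x"
      using fl_low[where f=f and x=x and N=N, OF f0[OF x]] fl_low[where f=g and x=x and N=N, OF g0[OF x]] by simp
    also have "\<dots> = real N * (\<lambda>x. f x + g x) x" by (simp add: algebra_simps)
    finally show "fl N f x + fl N g x \<le> fl N (\<lambda>x. f x + g x) x" by (rule fl_int)
  qed
  have fgN: "\<And>x. x \<in> XS \<Longrightarrow> fl N (\<lambda>x. f x + g x) x \<le> N"
    using fl_le'[where f="\<lambda>x. f x + g x"] f0 g0 fg1 by (meson add_nonneg_nonneg)
  have "J N (fl N f) + J N (fl N g) = J N (\<lambda>x. fl N f x + fl N g x)"
    using le fgN by (intro J_add[symmetric]) (meson le_trans)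
  also have "\<dots> \<le> J N (fl N (\<lambda>x. f x + g x))" using le by (rule J_mono)
  finally show ?thesis unfolding Lf_def add_divide_distrib[symmetric] using N by (intro divide_right_mono) simp_all
qed

lemma Lf_add_upper:
  assumes N: "N > 0" and f0: "\<And>x. x \<in> XS \<Longrightarrow> 0 \<le> f x" and g0: "\<And>x. x \<in> XS \<Longrightarrow> 0 \<le> g x"
    and fg1: "\<And>x. x \<in> XS \<Longrightarrow> f x + g x \<le> 1"
  shows "Lf N (\<lambda>x. f x + g x) \<le> Lf N f + Lf N g + 1 / real N"
proof -
  have le: "\<And>x. x \<in> XS \<Longrightarrow> fl N f x + fl N g x \<le> fl N (\<lambda>x. f x + g x) x"
  proof -
    fix x assume x: "x \<in> XS"
    have "real (fl N f x + fl N g x) \<le> real N * f x + real N * g x"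
      using fl_low[where f=f and x=x and N=N, OF f0[OF x]] fl_low[where f=g and x=x and N=N, OF g0[OF x]] by simp
    also have "\<dots> = real N * (\<lambda>x. f x + g x) x" by (simp add: algebra_simps)
    finally show "fl N f x + fl N g x \<le> fl N (\<lambda>x. f x + g x) x" by (rule fl_int)
  qed
  have up: "\<And>x. x \<in> XS \<Longrightarrow> fl N (\<lambda>x. f x + g x) x \<le> (fl N f x + fl N g x) + 1"
  proof -
    fix x assume x: "x \<in> XS"
    have fgx: "0 \<le> f x + g x" using f0[OF x] g0[OF x] by simp
    have "real (fl N (\<lambda>x. f x + g x) x) \<le> real N * f x + real N * g x"
      using fl_low[where f="\<lambda>x. f x + g x" and x=x and N=N] fgx by (simp add: algebra_simps)
    also have "\<dots> < real (fl N f x) + 1 + (real (fl N g x) + 1)"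
      using fl_up[where f=f and x=x and N=N, OF f0[OF x]] fl_up[where f=g and x=x and N=N, OF g0[OF x]] by simp
    also have "\<dots> = real ((fl N f x + fl N g x) + 2)" by simp
    finally have "fl N (\<lambda>x. f x + g x) x < (fl N f x + fl N g x) + 2" by (simp only: of_nat_less_iff)
    then show "fl N (\<lambda>x. f x + g x) x \<le> (fl N f x + fl N g x) + 1" by simp
  qed
  have fgN: "\<And>x. x \<in> XS \<Longrightarrow> fl N (\<lambda>x. f x + g x) x \<le> N"
    using fl_le'[where f="\<lambda>x. f x + g x"] f0 g0 fg1 by (meson add_nonneg_nonneg)
  have fN: "\<And>x. x \<in> XS \<Longrightarrow> fl N f x \<le> N" using le fgN by (meson le_trans le_add1)
  have gN: "\<And>x. x \<in> XS \<Longrightarrow> fl N g x \<le> N" using le fgN by (meson le_trans le_add2)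
  have sN: "\<And>x. x \<in> XS \<Longrightarrow> (fl N f x + fl N g x) + 1 \<le> N + 1" using le fgN by (meson le_trans add_le_mono1)
  have "J N (fl N (\<lambda>x. f x + g x)) = J (N + 1) (fl N (\<lambda>x. f x + g x))"
    using fgN by (intro J_ext'[symmetric]) auto
  also have "\<dots> \<le> J (N + 1) (\<lambda>x. (fl N f x + fl N g x) + 1)" using up by (rule J_mono)
  also have "\<dots> = J (N + 1) (\<lambda>x. fl N f x + fl N g x) + J (N + 1) (\<lambda>_. 1)"
    using sN by (rule J_add)
  also have "J (N + 1) (\<lambda>x. fl N f x + fl N g x) = J (N + 1) (fl N f) + J (N + 1) (fl N g)"
    using sN by (intro J_add) fastforce
  also have "J (N + 1) (\<lambda>_. 1) = 1" using J_const[of 1 "N + 1"] by simp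
  also have "J (N + 1) (fl N f) = J N (fl N f)" using fN by (intro J_ext') auto
  also have "J (N + 1) (fl N g) = J N (fl N g)" using gN by (intro J_ext') auto
  finally show ?thesis unfolding Lf_def using N by (simp add: field_simps)
qed

lemma small_zero:
  fixes d :: real
  assumes "\<And>N::nat. N > 0 \<Longrightarrow> \<bar>d\<bar> \<le> 2 / real N"
  shows "d = 0"
proof (rule ccontr)
  assume d: "d \<noteq> 0"
  then have pd: "\<bar>d\<bar> > 0" by simp
  obtain N :: nat where N: "2 / \<bar>d\<bar> < real N" using reals_Archimedean2 by blast
  have Np: "N > 0" using N pd by (metis divide_pos_pos of_nat_0_less_iff order.strict_trans zero_less_numeral)
  have "2 < real N * \<bar>d\<bar>" using N pd by (simp add: field_simps)
  then have "2 / real N < \<bar>d\<bar>" using Np by (simp add: field_simps)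
  then show False using assms[OF Np] by simp
qed

lemma Mf_add:
  assumes f0: "\<And>x. x \<in> XS \<Longrightarrow> 0 \<le> f x" and g0: "\<And>x. x \<in> XS \<Longrightarrow> 0 \<le> g x"
    and fg1: "\<And>x. x \<in> XS \<Longrightarrow> f x + g x \<le> 1"
  shows "Mf (\<lambda>x. f x + g x) = Mf f + Mf g"
proof -
  have f1: "\<And>x. x \<in> XS \<Longrightarrow> f x \<le> 1" using g0 fg1 by (meson add_increasing2 order_trans le_add_same_cancel1)
  have g1: "\<And>x. x \<in> XS \<Longrightarrow> g x \<le> 1" using f0 fg1 by (meson add_increasing order_trans le_add_same_cancel2)
  have fg0: "\<And>x. x \<in> XS \<Longrightarrow> 0 \<le> f x + g x" using f0 g0 by (simp add: add_nonneg_nonneg)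
  have "Mf (\<lambda>x. f x + g x) - (Mf f + Mf g) = 0"
  proof (rule small_zero)
    fix N :: nat assume N: "N > 0"
    note a = Mf_bounds[where f=f, OF N f0 f1] and b = Mf_bounds[where f=g, OF N g0 g1]
      and c = Mf_bounds[where f="\<lambda>x. f x + g x", OF N fg0 fg1]
    note l = Lf_add_lower[where f=f and g=g, OF N f0 g0 fg1] and u = Lf_add_upper[where f=f and g=g, OF N f0 g0 fg1]
    show "\<bar>Mf (\<lambda>x. f x + g x) - (Mf f + Mf g)\<bar> \<le> 2 / real N"
      using a b c l u by (simp add: abs_le_iff field_simps)
  qed
  then show ?thesis by simp
qed

lemma Lf_one: "N > 0 \<Longrightarrow> Lf N (\<lambda>_. 1) = 1"
proof -
  assume N: "N > 0"
  have "fl N (\<lambda>_. 1) = (\<lambda>_. N)" by (simp add: fl_def fun_eq_iff)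
  then show ?thesis unfolding Lf_def using J_const[of N N] N by simp
qed

lemma Mf_one: "Mf (\<lambda>_. 1) = 1"
  unfolding Mf_def using Lf_one by simp

lemma Lf_cong: "(\<And>x. x \<in> XS \<Longrightarrow> f x = g x) \<Longrightarrow> Lf N f = Lf N g"
  unfolding Lf_def by (intro arg_cong[where f="\<lambda>t. t / real N"] J_cong) (simp add: fl_def)

lemma Mf_cong:
  assumes "\<And>x. x \<in> XS \<Longrightarrow> f x = g x" shows "Mf f = Mf g"
proof -
  have "\<And>n. Lf (Suc n) f = Lf (Suc n) g" using assms by (rule Lf_cong)
  then show ?thesis unfolding Mf_def by simp
qed

lemma Mf_nonneg:
  assumes f0: "\<And>x. x \<in> XS \<Longrightarrow> 0 \<le> f x" and f1: "\<And>x. x \<in> XS \<Longrightarrow> f x \<le> 1"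
  shows "0 \<le> Mf f"
  using Mf_bounds(1)[where f=f, OF zero_less_one f0 f1] Lf_nonneg[of 1 f] by linarith

lemma J_transl:
  assumes G: "group G" and sg: "subgroup XS G"
    and inv: "\<And>a A. a \<in> XS \<Longrightarrow> A \<subseteq> XS \<Longrightarrow> m (a <#\<^bsub>G\<^esub> A) = m A"
    and a: "a \<in> XS"
  shows "J B (\<lambda>x. u (inv\<^bsub>G\<^esub> a \<otimes>\<^bsub>G\<^esub> x)) = J B u"
  unfolding J_def
proof (rule sum.cong[OF refl])
  fix j
  interpret group G by (rule G)
  have ac: "a \<in> carrier G" using a sg by (simp add: subgroup.mem_carrier)
  have e: "{x\<in>XS. j < u (inv\<^bsub>G\<^esub> a \<otimes>\<^bsub>G\<^esub> x)} = a <#\<^bsub>G\<^esub> {y\<in>XS. j < u y}"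
  proof (intro equalityI subsetI)
    fix x assume x: "x \<in> {x\<in>XS. j < u (inv\<^bsub>G\<^esub> a \<otimes>\<^bsub>G\<^esub> x)}"
    then have xs: "x \<in> XS" and xc: "x \<in> carrier G" using sg by (auto simp: subgroup.mem_carrier)
    have yin: "inv\<^bsub>G\<^esub> a \<otimes>\<^bsub>G\<^esub> x \<in> XS" using sg a xs by (simp add: subgroup.m_closed subgroup.m_inv_closed)
    have "x = a \<otimes>\<^bsub>G\<^esub> (inv\<^bsub>G\<^esub> a \<otimes>\<^bsub>G\<^esub> x)" using ac xc by (simp add: m_assoc[symmetric])
    then show "x \<in> a <#\<^bsub>G\<^esub> {y\<in>XS. j < u y}" using x yin unfolding l_coset_def by blast
  next
    fix x assume "x \<in> a <#\<^bsub>G\<^esub> {y\<in>XS. j < u y}"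
    then obtain y where y: "y \<in> XS" "j < u y" and xe: "x = a \<otimes>\<^bsub>G\<^esub> y" unfolding l_coset_def by blast
    have yc: "y \<in> carrier G" using y sg by (simp add: subgroup.mem_carrier)
    have "inv\<^bsub>G\<^esub> a \<otimes>\<^bsub>G\<^esub> x = y" using xe ac yc by (simp add: m_assoc[symmetric])
    moreover have "x \<in> XS" using xe y a sg by (simp add: subgroup.m_closed)
    ultimately show "x \<in> {x\<in>XS. j < u (inv\<^bsub>G\<^esub> a \<otimes>\<^bsub>G\<^esub> x)}" using y by simp
  qed
  show "m {x\<in>XS. j < u (inv\<^bsub>G\<^esub> a \<otimes>\<^bsub>G\<^esub> x)} = m {x\<in>XS. j < u x}"
    unfolding e by (rule inv[OF a]) auto
qed

lemma Mf_transl: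
  assumes G: "group G" and sg: "subgroup XS G"
    and inv: "\<And>a A. a \<in> XS \<Longrightarrow> A \<subseteq> XS \<Longrightarrow> m (a <#\<^bsub>G\<^esub> A) = m A"
    and a: "a \<in> XS"
  shows "Mf (\<lambda>x. f (inv\<^bsub>G\<^esub> a \<otimes>\<^bsub>G\<^esub> x)) = Mf f"
proof -
  have "\<And>N. Lf N (\<lambda>x. f (inv\<^bsub>G\<^esub> a \<otimes>\<^bsub>G\<^esub> x)) = Lf N f"
  proof -
    fix N
    have "fl N (\<lambda>x. f (inv\<^bsub>G\<^esub> a \<otimes>\<^bsub>G\<^esub> x)) = (\<lambda>x. fl N f (inv\<^bsub>G\<^esub> a \<otimes>\<^bsub>G\<^esub> x))"
      by (simp add: fl_def fun_eq_iff)
    then show "Lf N (\<lambda>x. f (inv\<^bsub>G\<^esub> a \<otimes>\<^bsub>G\<^esub> x)) = Lf N f"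
      unfolding Lf_def using J_transl[OF G sg inv a] by simp
  qed
  then show ?thesis unfolding Mf_def by simp
qed

end


lemma lcos_upd: "a <#\<^bsub>G\<lparr>carrier := H\<rparr>\<^esub> A = a <#\<^bsub>G\<^esub> A"
  by (simp add: l_coset_def)

lemma amenable_prod:
  fixes G1 :: "'a monoid" and G2 :: "'b monoid"
  assumes G1: "group G1" and sg1: "subgroup H1 G1" and am1: "amenable (G1\<lparr>carrier := H1\<rparr>)"
    and G2: "group G2" and sg2: "subgroup H2 G2" and am2: "amenable (G2\<lparr>carrier := H2\<rparr>)"
  shows "amenable ((G1 \<times>\<times> G2)\<lparr>carrier := H1 \<times> H2\<rparr>)"
proof -
  have c1: "carrier (G1\<lparr>carrier := H1\<rparr>) = H1" by simp
  have c2: "carrier (G2\<lparr>carrier := H2\<rparr>) = H2" by simp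
  have cP: "carrier ((G1 \<times>\<times> G2)\<lparr>carrier := H1 \<times> H2\<rparr>) = H1 \<times> H2" by simp
  from am1 obtain m1 :: "_ set \<Rightarrow> real" where m1: "(\<forall>A. A \<subseteq> H1 \<longrightarrow> 0 \<le> m1 A) \<and> m1 H1 = 1 \<and>
     (\<forall>A B. A \<subseteq> H1 \<longrightarrow> B \<subseteq> H1 \<longrightarrow> A \<inter> B = {} \<longrightarrow> m1 (A \<union> B) = m1 A + m1 B) \<and>
     (\<forall>g A. g \<in> H1 \<longrightarrow> A \<subseteq> H1 \<longrightarrow> m1 (g <#\<^bsub>G1\<^esub> A) = m1 A)"
    unfolding amenable_def lcos_upd c1 apply (elim exE) apply (rule that) apply assumption done
  from am2 obtain m2 :: "_ set \<Rightarrow> real" where m2: "(\<forall>A. A \<subseteq> H2 \<longrightarrow> 0 \<le> m2 A) \<and> m2 H2 = 1 \<and>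
     (\<forall>A B. A \<subseteq> H2 \<longrightarrow> B \<subseteq> H2 \<longrightarrow> A \<inter> B = {} \<longrightarrow> m2 (A \<union> B) = m2 A + m2 B) \<and>
     (\<forall>g A. g \<in> H2 \<longrightarrow> A \<subseteq> H2 \<longrightarrow> m2 (g <#\<^bsub>G2\<^esub> A) = m2 A)"
    unfolding amenable_def lcos_upd c2 apply (elim exE) apply (rule that) apply assumption done
  interpret M1: fm H1 m1 using m1 by unfold_locales auto
  interpret M2: fm H2 m2 using m2 by unfold_locales auto
  have inv1: "\<And>a A. a \<in> H1 \<Longrightarrow> A \<subseteq> H1 \<Longrightarrow> m1 (a <#\<^bsub>G1\<^esub> A) = m1 A" using m1 by blast
  have inv2: "\<And>a A. a \<in> H2 \<Longrightarrow> A \<subseteq> H2 \<Longrightarrow> m2 (a <#\<^bsub>G2\<^esub> A) = m2 A" using m2 by blast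
  define sec :: "('a \<times> 'b) set \<Rightarrow> 'a \<Rightarrow> 'b set" where "sec A x = {y. (x, y) \<in> A}" for A x
  define mp :: "('a \<times> 'b) set \<Rightarrow> real" where "mp A = M1.Mf (\<lambda>x. m2 (sec A x))" for A
  have secH: "\<And>A x. A \<subseteq> H1 \<times> H2 \<Longrightarrow> sec A x \<subseteq> H2" by (auto simp: sec_def)
  have f0: "\<And>A x. A \<subseteq> H1 \<times> H2 \<Longrightarrow> 0 \<le> m2 (sec A x)" using secH M2.nn by blast
  have f1: "\<And>A x. A \<subseteq> H1 \<times> H2 \<Longrightarrow> m2 (sec A x) \<le> 1" using secH M2.m_le1 by blast
  show ?thesis
    unfolding amenable_def lcos_upd cP
  proof (rule exI[of _ mp], intro conjI allI impI)
    fix A assume A: "A \<subseteq> H1 \<times> H2"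
    show "0 \<le> mp A" unfolding mp_def by (rule M1.Mf_nonneg) (use f0[OF A] f1[OF A] in auto)
  next
    have "mp (H1 \<times> H2) = M1.Mf (\<lambda>_. 1)"
      unfolding mp_def by (rule M1.Mf_cong) (simp add: sec_def M2.tot)
    then show "mp (H1 \<times> H2) = 1" using M1.Mf_one by simp
  next
    fix A B assume A: "A \<subseteq> H1 \<times> H2" and B: "B \<subseteq> H1 \<times> H2" and AB: "A \<inter> B = {}"
    have "mp (A \<union> B) = M1.Mf (\<lambda>x. m2 (sec A x) + m2 (sec B x))"
      unfolding mp_def
    proof (rule M1.Mf_cong)
      fix x
      have "sec (A \<union> B) x = sec A x \<union> sec B x" by (auto simp: sec_def)
      moreover have "sec A x \<inter> sec B x = {}" using AB by (auto simp: sec_def)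
      ultimately show "m2 (sec (A \<union> B) x) = m2 (sec A x) + m2 (sec B x)"
        using M2.add[OF secH[OF A] secH[OF B]] by simp
    qed
    also have "\<dots> = mp A + mp B"
      unfolding mp_def
    proof (rule M1.Mf_add)
      fix x
      show "0 \<le> m2 (sec A x)" by (rule f0[OF A])
      show "0 \<le> m2 (sec B x)" by (rule f0[OF B])
      have u: "sec A x \<union> sec B x = sec (A \<union> B) x" by (auto simp: sec_def)
      have d: "sec A x \<inter> sec B x = {}" using AB by (auto simp: sec_def)
      have ab: "A \<union> B \<subseteq> H1 \<times> H2" using A B by blast
      have "m2 (sec A x) + m2 (sec B x) = m2 (sec (A \<union> B) x)"
        using M2.add[OF secH[OF A] secH[OF B] d] u by simp
      then show "m2 (sec A x) + m2 (sec B x) \<le> 1" using f1[OF ab, of x] by simp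
    qed
    finally show "mp (A \<union> B) = mp A + mp B" .
  next
    fix g A assume g: "g \<in> H1 \<times> H2" and A: "A \<subseteq> H1 \<times> H2"
    obtain a b where ab: "g = (a, b)" "a \<in> H1" "b \<in> H2" using g by auto
    interpret g1: group G1 by (rule G1)
    interpret g2: group G2 by (rule G2)
    have ac: "a \<in> carrier G1" using ab sg1 by (simp add: subgroup.mem_carrier)
    have H1c: "H1 \<subseteq> carrier G1" using sg1 by (rule subgroup.subset)
    have "mp (g <#\<^bsub>G1 \<times>\<times> G2\<^esub> A) = M1.Mf (\<lambda>x. m2 (sec A (inv\<^bsub>G1\<^esub> a \<otimes>\<^bsub>G1\<^esub> x)))"
      unfolding mp_def
    proof (rule M1.Mf_cong)
      fix x assume x: "x \<in> H1"
      have xc: "x \<in> carrier G1" using x H1c by blast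
      have "sec (g <#\<^bsub>G1 \<times>\<times> G2\<^esub> A) x = b <#\<^bsub>G2\<^esub> sec A (inv\<^bsub>G1\<^esub> a \<otimes>\<^bsub>G1\<^esub> x)"
      proof (intro equalityI subsetI)
        fix y assume "y \<in> sec (g <#\<^bsub>G1 \<times>\<times> G2\<^esub> A) x"
        then obtain x' y' where p: "(x', y') \<in> A" and e: "x = a \<otimes>\<^bsub>G1\<^esub> x'" "y = b \<otimes>\<^bsub>G2\<^esub> y'"
          unfolding sec_def l_coset_def ab by auto
        have x'c: "x' \<in> carrier G1" using p A H1c by blast
        have "inv\<^bsub>G1\<^esub> a \<otimes>\<^bsub>G1\<^esub> x = x'" using e(1) ac x'c by (simp add: g1.m_assoc[symmetric])
        then show "y \<in> b <#\<^bsub>G2\<^esub> sec A (inv\<^bsub>G1\<^esub> a \<otimes>\<^bsub>G1\<^esub> x)"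
          using p e(2) unfolding sec_def l_coset_def by blast
      next
        fix y assume "y \<in> b <#\<^bsub>G2\<^esub> sec A (inv\<^bsub>G1\<^esub> a \<otimes>\<^bsub>G1\<^esub> x)"
        then obtain y' where p: "(inv\<^bsub>G1\<^esub> a \<otimes>\<^bsub>G1\<^esub> x, y') \<in> A" and e: "y = b \<otimes>\<^bsub>G2\<^esub> y'"
          unfolding sec_def l_coset_def by auto
        have "a \<otimes>\<^bsub>G1\<^esub> (inv\<^bsub>G1\<^esub> a \<otimes>\<^bsub>G1\<^esub> x) = x" using ac xc by (simp add: g1.m_assoc[symmetric])
        then have "(x, y) = g \<otimes>\<^bsub>G1 \<times>\<times> G2\<^esub> (inv\<^bsub>G1\<^esub> a \<otimes>\<^bsub>G1\<^esub> x, y')" using e ab by simp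
        then show "y \<in> sec (g <#\<^bsub>G1 \<times>\<times> G2\<^esub> A) x"
          using p unfolding sec_def l_coset_def by blast
      qed
      then show "m2 (sec (g <#\<^bsub>G1 \<times>\<times> G2\<^esub> A) x) = m2 (sec A (inv\<^bsub>G1\<^esub> a \<otimes>\<^bsub>G1\<^esub> x))"
        using inv2[OF ab(3) secH[OF A]] by simp
    qed
    also have "\<dots> = mp A"
      unfolding mp_def by (rule M1.Mf_transl[OF G1 sg1 inv1 ab(2)])
    finally show "mp (g <#\<^bsub>G1 \<times>\<times> G2\<^esub> A) = mp A" .
  qed
qed


definition rep :: "nat set set \<Rightarrow> (nat \<Rightarrow> ('a,'b) monoid_scheme) \<Rightarrow> ('g \<Rightarrow> (nat\<Rightarrow>'a) set) \<Rightarrow> 'g \<Rightarrow> nat \<Rightarrow> 'a" where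
  "rep U L \<pi> g = (SOME z. z \<in> carrier (prodgrp L) \<and> \<pi> g = ultraN U L #>\<^bsub>prodgrp L\<^esub> z)"

lemma rep_spec:
  assumes "\<pi> g \<in> carrier (ultraprod U L)"
  shows "rep U L \<pi> g \<in> carrier (prodgrp L) \<and> \<pi> g = ultraN U L #>\<^bsub>prodgrp L\<^esub> rep U L \<pi> g"
proof -
  obtain z where "z \<in> carrier (prodgrp L)" "\<pi> g = ultraN U L #>\<^bsub>prodgrp L\<^esub> z"
    using ultra_rep[OF assms] by blast
  then show ?thesis unfolding rep_def by (rule someI[where P="\<lambda>z. z \<in> carrier (prodgrp L) \<and> \<pi> g = ultraN U L #>\<^bsub>prodgrp L\<^esub> z", OF conjI])
qed

lemma rep_mult:
  assumes gr: "\<And>i. group (L i)" and U: "free_ultrafilter U" and hom: "\<pi> \<in> hom G (ultraprod U L)"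
    and G: "group G" and g: "g \<in> carrier G" and h: "h \<in> carrier G"
  shows "{i. rep U L \<pi> (g \<otimes>\<^bsub>G\<^esub> h) i = rep U L \<pi> g i \<otimes>\<^bsub>L i\<^esub> rep U L \<pi> h i} \<in> U"
proof -
  interpret P: group "prodgrp L" by (rule prodgrp_group[OF gr])
  have gh: "g \<otimes>\<^bsub>G\<^esub> h \<in> carrier G" using G g h by (simp add: group.is_monoid monoid.m_closed)
  have inc: "\<And>x. x \<in> carrier G \<Longrightarrow> \<pi> x \<in> carrier (ultraprod U L)"
    using hom by (auto simp: hom_def)
  note sg = rep_spec[where \<pi>=\<pi> and g=g, OF inc[OF g]] and sh = rep_spec[where \<pi>=\<pi> and g=h, OF inc[OF h]]
    and sgh = rep_spec[where \<pi>=\<pi> and g="g \<otimes>\<^bsub>G\<^esub> h", OF inc[OF gh]]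
  have "\<pi> (g \<otimes>\<^bsub>G\<^esub> h) = \<pi> g \<otimes>\<^bsub>ultraprod U L\<^esub> \<pi> h" using hom g h by (simp add: hom_def)
  also have "\<dots> = ultraN U L #>\<^bsub>prodgrp L\<^esub> (rep U L \<pi> g \<otimes>\<^bsub>prodgrp L\<^esub> rep U L \<pi> h)"
    using sg sh ultra_mult[OF gr U, where x="rep U L \<pi> g" and y="rep U L \<pi> h"] by simp
  finally have "ultraN U L #>\<^bsub>prodgrp L\<^esub> rep U L \<pi> (g \<otimes>\<^bsub>G\<^esub> h) =
      ultraN U L #>\<^bsub>prodgrp L\<^esub> (rep U L \<pi> g \<otimes>\<^bsub>prodgrp L\<^esub> rep U L \<pi> h)" using sgh by simp
  moreover have "rep U L \<pi> g \<otimes>\<^bsub>prodgrp L\<^esub> rep U L \<pi> h \<in> carrier (prodgrp L)"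
    using sg sh P.m_closed by blast
  ultimately have "{i. rep U L \<pi> (g \<otimes>\<^bsub>G\<^esub> h) i = (rep U L \<pi> g \<otimes>\<^bsub>prodgrp L\<^esub> rep U L \<pi> h) i} \<in> U"
    using ultra_coset_eq[where L=L, OF gr U, where z="rep U L \<pi> (g \<otimes>\<^bsub>G\<^esub> h)"
        and z'="rep U L \<pi> g \<otimes>\<^bsub>prodgrp L\<^esub> rep U L \<pi> h"] sgh by blast
  then show ?thesis by (simp add: prodgrp_mult)
qed

definition comb :: "(nat \<Rightarrow> 'a \<times> 'b) \<Rightarrow> (nat \<Rightarrow> 'c \<times> 'd) \<Rightarrow> nat \<Rightarrow> ('a \<times> 'c) \<times> ('b \<times> 'd)" where
  "comb x y n = ((fst (x (fst (prod_decode n))), fst (y (snd (prod_decode n)))),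
                 (snd (x (fst (prod_decode n))), snd (y (snd (prod_decode n)))))"

lemma comb_eq_iff: "(comb x y n = comb x' y' n) \<longleftrightarrow>
   x (fst (prod_decode n)) = x' (fst (prod_decode n)) \<and> y (snd (prod_decode n)) = y' (snd (prod_decode n))"
  by (auto simp: comb_def prod_eq_iff)

theorem proposition2p9:
  fixes G1 :: "'a1 monoid" and G2 :: "'a2 monoid"
    and K1 :: "'k1 monoid" and K2 :: "'k2 monoid"
    and H1 :: "'a1 set" and H2 :: "'a2 set"
  assumes "group G1" "subgroup H1 G1" "group G2" "subgroup H2 G2"
    and "group K1" "group K2"
    and "rel_sofic_over TYPE('c1) H1 G1 K1"
    and "rel_sofic_over TYPE('c2) H2 G2 K2"
  shows "rel_sofic_over TYPE('c1 \<times> 'c2) (H1 \<times> H2) (G1 \<times>\<times> G2) (K1 \<times>\<times> K2)"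
proof -
  from assms(7) obtain Gs1 :: "nat \<Rightarrow> 'c1 monoid" and Hs1 U1 \<pi>1 where
    A1: "\<forall>i. group (Gs1 i) \<and> subgroup (Hs1 i) (Gs1 i) \<and> sofic (Gs1 i) \<and> amenable ((Gs1 i)\<lparr>carrier := Hs1 i\<rparr>)"
    and U1: "free_ultrafilter U1" and h1: "\<pi>1 \<in> hom G1 (ultraprod U1 (\<lambda>i. Gs1 i \<times>\<times> K1))"
    and i1: "inj_on \<pi>1 (carrier G1)"
    and s1: "\<pi>1 ` carrier G1 \<inter> ultrasub U1 (\<lambda>i. Gs1 i \<times>\<times> K1) (\<lambda>i. Hs1 i \<times> carrier K1) = \<pi>1 ` H1"
    unfolding rel_sofic_over_def apply (elim exE conjE) apply (rule that) apply assumption+ done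
  from assms(8) obtain Gs2 :: "nat \<Rightarrow> 'c2 monoid" and Hs2 U2 \<pi>2 where
    A2: "\<forall>i. group (Gs2 i) \<and> subgroup (Hs2 i) (Gs2 i) \<and> sofic (Gs2 i) \<and> amenable ((Gs2 i)\<lparr>carrier := Hs2 i\<rparr>)"
    and U2: "free_ultrafilter U2" and h2: "\<pi>2 \<in> hom G2 (ultraprod U2 (\<lambda>i. Gs2 i \<times>\<times> K2))"
    and i2: "inj_on \<pi>2 (carrier G2)"
    and s2: "\<pi>2 ` carrier G2 \<inter> ultrasub U2 (\<lambda>i. Gs2 i \<times>\<times> K2) (\<lambda>i. Hs2 i \<times> carrier K2) = \<pi>2 ` H2"
    unfolding rel_sofic_over_def apply (elim exE conjE) apply (rule that) apply assumption+ done
  define L1 where "L1 = (\<lambda>i. Gs1 i \<times>\<times> K1)"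
  define L2 where "L2 = (\<lambda>i. Gs2 i \<times>\<times> K2)"
  define Gs where "Gs = (\<lambda>n. Gs1 (fst (prod_decode n)) \<times>\<times> Gs2 (snd (prod_decode n)))"
  define Hs where "Hs = (\<lambda>n. Hs1 (fst (prod_decode n)) \<times> Hs2 (snd (prod_decode n)))"
  define U where "U = pu U1 U2"
  define L where "L = (\<lambda>n. Gs n \<times>\<times> (K1 \<times>\<times> K2))"
  define r1 where "r1 = rep U1 L1 \<pi>1"
  define r2 where "r2 = rep U2 L2 \<pi>2"
  define \<pi> where "\<pi> = (\<lambda>p. ultraN U L #>\<^bsub>prodgrp L\<^esub> comb (r1 (fst p)) (r2 (snd p)))"
  have grL1: "\<And>i. group (L1 i)" using A1 assms(5) by (simp add: L1_def DirProd_group)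
  have grL2: "\<And>i. group (L2 i)" using A2 assms(6) by (simp add: L2_def DirProd_group)
  have grGs: "\<And>i. group (Gs i)" using A1 A2 by (simp add: Gs_def DirProd_group)
  have grL: "\<And>i. group (L i)" using grGs assms(5,6) by (simp add: L_def DirProd_group)
  have U: "free_ultrafilter U" by (simp add: U_def pu_free U1 U2)
  have r1: "\<And>g. g \<in> carrier G1 \<Longrightarrow> r1 g \<in> carrier (prodgrp L1) \<and> \<pi>1 g = ultraN U1 L1 #>\<^bsub>prodgrp L1\<^esub> r1 g"
    unfolding r1_def using h1 by (intro rep_spec) (auto simp: hom_def L1_def)
  have r2: "\<And>g. g \<in> carrier G2 \<Longrightarrow> r2 g \<in> carrier (prodgrp L2) \<and> \<pi>2 g = ultraN U2 L2 #>\<^bsub>prodgrp L2\<^esub> r2 g"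
    unfolding r2_def using h2 by (intro rep_spec) (auto simp: hom_def L2_def)
  have combc: "\<And>x y. x \<in> carrier (prodgrp L1) \<Longrightarrow> y \<in> carrier (prodgrp L2) \<Longrightarrow> comb x y \<in> carrier (prodgrp L)"
    by (auto simp: prodgrp_carrier comb_def L_def L1_def L2_def Gs_def Pi_iff mem_Times_iff)
  have combm: "\<And>x y x' y'. comb x y \<otimes>\<^bsub>prodgrp L\<^esub> comb x' y' = comb (x \<otimes>\<^bsub>prodgrp L1\<^esub> x') (y \<otimes>\<^bsub>prodgrp L2\<^esub> y')"
    by (auto simp: prodgrp_mult comb_def L_def L1_def L2_def Gs_def mult_DirProd')
  have combeq: "\<And>x y x' y'. x \<in> carrier (prodgrp L1) \<Longrightarrow> y \<in> carrier (prodgrp L2) \<Longrightarrow>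
      x' \<in> carrier (prodgrp L1) \<Longrightarrow> y' \<in> carrier (prodgrp L2) \<Longrightarrow>
      (ultraN U L #>\<^bsub>prodgrp L\<^esub> comb x y = ultraN U L #>\<^bsub>prodgrp L\<^esub> comb x' y')
       \<longleftrightarrow> {i. x i = x' i} \<in> U1 \<and> {j. y j = y' j} \<in> U2"
  proof -
    fix x y x' y'
    assume c: "x \<in> carrier (prodgrp L1)" "y \<in> carrier (prodgrp L2)"
      "x' \<in> carrier (prodgrp L1)" "y' \<in> carrier (prodgrp L2)"
    have "(ultraN U L #>\<^bsub>prodgrp L\<^esub> comb x y = ultraN U L #>\<^bsub>prodgrp L\<^esub> comb x' y')
       \<longleftrightarrow> {n. comb x y n = comb x' y' n} \<in> U"
      using ultra_coset_eq[where L=L, OF grL U, where z="comb x y" and z'="comb x' y'"] combc c by blast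
    also have "\<dots> \<longleftrightarrow> {i. x i = x' i} \<in> U1 \<and> {j. y j = y' j} \<in> U2"
      unfolding comb_eq_iff U_def using pu_rect[OF U1 U2] .
    finally show "?thesis x y x' y'" .
  qed
  have sg1: "\<And>i. subgroup (Hs1 i) (Gs1 i)" using A1 by blast
  have sg2: "\<And>i. subgroup (Hs2 i) (Gs2 i)" using A2 by blast
  have ss1: "\<And>i. Hs1 i \<subseteq> carrier (Gs1 i)" by (rule subgroup.subset[OF sg1])
  have ss2: "\<And>i. Hs2 i \<subseteq> carrier (Gs2 i)" by (rule subgroup.subset[OF sg2])
  have so1: "\<And>i. \<one>\<^bsub>Gs1 i\<^esub> \<in> Hs1 i" by (rule subgroup.one_closed[OF sg1])
  have so2: "\<And>i. \<one>\<^bsub>Gs2 i\<^esub> \<in> Hs2 i" by (rule subgroup.one_closed[OF sg2])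
  have k1: "\<one>\<^bsub>K1\<^esub> \<in> carrier K1" using assms(5) by (simp add: group.is_monoid monoid.one_closed)
  have k2: "\<one>\<^bsub>K2\<^esub> \<in> carrier K2" using assms(6) by (simp add: group.is_monoid monoid.one_closed)
  have S1: "\<And>i. Hs1 i \<times> carrier K1 \<subseteq> carrier (L1 i)" "\<And>i. \<one>\<^bsub>L1 i\<^esub> \<in> Hs1 i \<times> carrier K1"
    using ss1 so1 k1 by (auto simp: L1_def)
  have S2: "\<And>i. Hs2 i \<times> carrier K2 \<subseteq> carrier (L2 i)" "\<And>i. \<one>\<^bsub>L2 i\<^esub> \<in> Hs2 i \<times> carrier K2"
    using ss2 so2 k2 by (auto simp: L2_def)
  have S: "\<And>i. Hs i \<times> carrier (K1 \<times>\<times> K2) \<subseteq> carrier (L i)" "\<And>i. \<one>\<^bsub>L i\<^esub> \<in> Hs i \<times> carrier (K1 \<times>\<times> K2)"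
    using ss1 so1 k1 ss2 so2 k2 by (auto simp: L_def Gs_def Hs_def intro: subsetD[OF ss1] subsetD[OF ss2])
  have combsub: "\<And>x y. x \<in> carrier (prodgrp L1) \<Longrightarrow> y \<in> carrier (prodgrp L2) \<Longrightarrow>
      (ultraN U L #>\<^bsub>prodgrp L\<^esub> comb x y \<in> ultrasub U L (\<lambda>n. Hs n \<times> carrier (K1 \<times>\<times> K2)))
       \<longleftrightarrow> {i. x i \<in> Hs1 i \<times> carrier K1} \<in> U1 \<and> {j. y j \<in> Hs2 j \<times> carrier K2} \<in> U2"
  proof -
    fix x y
    assume c: "x \<in> carrier (prodgrp L1)" "y \<in> carrier (prodgrp L2)"
    have "(ultraN U L #>\<^bsub>prodgrp L\<^esub> comb x y \<in> ultrasub U L (\<lambda>n. Hs n \<times> carrier (K1 \<times>\<times> K2)))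
       \<longleftrightarrow> {n. comb x y n \<in> Hs n \<times> carrier (K1 \<times>\<times> K2)} \<in> U"
      by (rule ultra_sub_iff[where L=L, OF grL U S combc[OF c]])
    also have "{n. comb x y n \<in> Hs n \<times> carrier (K1 \<times>\<times> K2)} =
        {n. x (fst (prod_decode n)) \<in> Hs1 (fst (prod_decode n)) \<times> carrier K1 \<and>
            y (snd (prod_decode n)) \<in> Hs2 (snd (prod_decode n)) \<times> carrier K2}"
      by (auto simp: comb_def Hs_def mem_Times_iff)
    also have "\<dots> \<in> U \<longleftrightarrow> {i. x i \<in> Hs1 i \<times> carrier K1} \<in> U1 \<and> {j. y j \<in> Hs2 j \<times> carrier K2} \<in> U2"
      unfolding U_def by (rule pu_rect[OF U1 U2])
    finally show "?thesis x y" .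
  qed
  have sub1: "\<And>z. z \<in> carrier (prodgrp L1) \<Longrightarrow>
      (ultraN U1 L1 #>\<^bsub>prodgrp L1\<^esub> z \<in> ultrasub U1 L1 (\<lambda>i. Hs1 i \<times> carrier K1)) \<longleftrightarrow> {i. z i \<in> Hs1 i \<times> carrier K1} \<in> U1"
    by (rule ultra_sub_iff[where L=L1, OF grL1 U1 S1])
  have sub2: "\<And>z. z \<in> carrier (prodgrp L2) \<Longrightarrow>
      (ultraN U2 L2 #>\<^bsub>prodgrp L2\<^esub> z \<in> ultrasub U2 L2 (\<lambda>i. Hs2 i \<times> carrier K2)) \<longleftrightarrow> {i. z i \<in> Hs2 i \<times> carrier K2} \<in> U2"
    by (rule ultra_sub_iff[where L=L2, OF grL2 U2 S2])
  have eq1: "\<And>z z'. z \<in> carrier (prodgrp L1) \<Longrightarrow> z' \<in> carrier (prodgrp L1) \<Longrightarrow>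
      (ultraN U1 L1 #>\<^bsub>prodgrp L1\<^esub> z = ultraN U1 L1 #>\<^bsub>prodgrp L1\<^esub> z') \<longleftrightarrow> {i. z i = z' i} \<in> U1"
    by (rule ultra_coset_eq[where L=L1, OF grL1 U1])
  have eq2: "\<And>z z'. z \<in> carrier (prodgrp L2) \<Longrightarrow> z' \<in> carrier (prodgrp L2) \<Longrightarrow>
      (ultraN U2 L2 #>\<^bsub>prodgrp L2\<^esub> z = ultraN U2 L2 #>\<^bsub>prodgrp L2\<^esub> z') \<longleftrightarrow> {i. z i = z' i} \<in> U2"
    by (rule ultra_coset_eq[where L=L2, OF grL2 U2])
  have H1c: "H1 \<subseteq> carrier G1" using assms(2) by (rule subgroup.subset)
  have H2c: "H2 \<subseteq> carrier G2" using assms(4) by (rule subgroup.subset)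

  have s1': "\<pi>1 ` carrier G1 \<inter> ultrasub U1 L1 (\<lambda>i. Hs1 i \<times> carrier K1) = \<pi>1 ` H1"
    using s1 unfolding L1_def .
  have s2': "\<pi>2 ` carrier G2 \<inter> ultrasub U2 L2 (\<lambda>i. Hs2 i \<times> carrier K2) = \<pi>2 ` H2"
    using s2 unfolding L2_def .
  have hom: "\<pi> \<in> hom (G1 \<times>\<times> G2) (ultraprod U L)"
  proof (unfold hom_def, intro CollectI conjI ballI)
    show "\<pi> \<in> carrier (G1 \<times>\<times> G2) \<rightarrow> carrier (ultraprod U L)"
      using r1 r2 by (auto simp: \<pi>_def intro!: ultra_coset_in combc)
  next
    fix p q assume p: "p \<in> carrier (G1 \<times>\<times> G2)" and q: "q \<in> carrier (G1 \<times>\<times> G2)"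
    obtain g1 g2 where pg: "p = (g1, g2)" "g1 \<in> carrier G1" "g2 \<in> carrier G2" using p by auto
    obtain k1 k2 where qk: "q = (k1, k2)" "k1 \<in> carrier G1" "k2 \<in> carrier G2" using q by auto
    note cg1 = conjunct1[OF r1[OF pg(2)]] and cg2 = conjunct1[OF r2[OF pg(3)]]
    note ck1 = conjunct1[OF r1[OF qk(2)]] and ck2 = conjunct1[OF r2[OF qk(3)]]
    have gk1: "g1 \<otimes>\<^bsub>G1\<^esub> k1 \<in> carrier G1" using pg qk assms(1) by (simp add: group.is_monoid monoid.m_closed)
    have gk2: "g2 \<otimes>\<^bsub>G2\<^esub> k2 \<in> carrier G2" using pg qk assms(3) by (simp add: group.is_monoid monoid.m_closed)
    have m1: "{i. r1 (g1 \<otimes>\<^bsub>G1\<^esub> k1) i = (r1 g1 \<otimes>\<^bsub>prodgrp L1\<^esub> r1 k1) i} \<in> U1"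
      using rep_mult[where L=L1, OF grL1 U1 _ assms(1) pg(2) qk(2)] h1
      by (simp add: r1_def L1_def prodgrp_mult)
    have m2: "{i. r2 (g2 \<otimes>\<^bsub>G2\<^esub> k2) i = (r2 g2 \<otimes>\<^bsub>prodgrp L2\<^esub> r2 k2) i} \<in> U2"
      using rep_mult[where L=L2, OF grL2 U2 _ assms(3) pg(3) qk(3)] h2
      by (simp add: r2_def L2_def prodgrp_mult)
    have c1: "r1 g1 \<otimes>\<^bsub>prodgrp L1\<^esub> r1 k1 \<in> carrier (prodgrp L1)"
      using cg1 ck1 group.is_monoid[OF prodgrp_group[OF grL1]] by (simp add: monoid.m_closed)
    have c2: "r2 g2 \<otimes>\<^bsub>prodgrp L2\<^esub> r2 k2 \<in> carrier (prodgrp L2)"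
      using cg2 ck2 group.is_monoid[OF prodgrp_group[OF grL2]] by (simp add: monoid.m_closed)
    have "\<pi> p \<otimes>\<^bsub>ultraprod U L\<^esub> \<pi> q =
        ultraN U L #>\<^bsub>prodgrp L\<^esub> (comb (r1 g1) (r2 g2) \<otimes>\<^bsub>prodgrp L\<^esub> comb (r1 k1) (r2 k2))"
      unfolding \<pi>_def pg qk fst_conv snd_conv
      by (rule ultra_mult[where L=L, OF grL U combc[OF cg1 cg2] combc[OF ck1 ck2]])
    also have "\<dots> = ultraN U L #>\<^bsub>prodgrp L\<^esub> comb (r1 g1 \<otimes>\<^bsub>prodgrp L1\<^esub> r1 k1) (r2 g2 \<otimes>\<^bsub>prodgrp L2\<^esub> r2 k2)"
      unfolding combm ..
    also have "\<dots> = ultraN U L #>\<^bsub>prodgrp L\<^esub> comb (r1 (g1 \<otimes>\<^bsub>G1\<^esub> k1)) (r2 (g2 \<otimes>\<^bsub>G2\<^esub> k2))"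
    proof (rule combeq[OF c1 c2 conjunct1[OF r1[OF gk1]] conjunct1[OF r2[OF gk2]], THEN iffD2], rule conjI)
      show "{i. (r1 g1 \<otimes>\<^bsub>prodgrp L1\<^esub> r1 k1) i = r1 (g1 \<otimes>\<^bsub>G1\<^esub> k1) i} \<in> U1"
        using m1 by (simp add: eq_commute)
      show "{i. (r2 g2 \<otimes>\<^bsub>prodgrp L2\<^esub> r2 k2) i = r2 (g2 \<otimes>\<^bsub>G2\<^esub> k2) i} \<in> U2"
        using m2 by (simp add: eq_commute)
    qed
    also have "\<dots> = \<pi> (p \<otimes>\<^bsub>G1 \<times>\<times> G2\<^esub> q)"
      unfolding \<pi>_def pg qk mult_DirProd fst_conv snd_conv ..
    finally show "\<pi> (p \<otimes>\<^bsub>G1 \<times>\<times> G2\<^esub> q) = \<pi> p \<otimes>\<^bsub>ultraprod U L\<^esub> \<pi> q" by (rule sym)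
  qed

  have inj: "inj_on \<pi> (carrier (G1 \<times>\<times> G2))"
  proof (rule inj_onI)
    fix p q assume p: "p \<in> carrier (G1 \<times>\<times> G2)" and q: "q \<in> carrier (G1 \<times>\<times> G2)" and e: "\<pi> p = \<pi> q"
    obtain g1 g2 where pg: "p = (g1, g2)" "g1 \<in> carrier G1" "g2 \<in> carrier G2" using p by auto
    obtain k1 k2 where qk: "q = (k1, k2)" "k1 \<in> carrier G1" "k2 \<in> carrier G2" using q by auto
    note cg1 = r1[OF pg(2)] and cg2 = r2[OF pg(3)]
    note ck1 = r1[OF qk(2)] and ck2 = r2[OF qk(3)]
    have "ultraN U L #>\<^bsub>prodgrp L\<^esub> comb (r1 g1) (r2 g2) = ultraN U L #>\<^bsub>prodgrp L\<^esub> comb (r1 k1) (r2 k2)"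
      using e unfolding \<pi>_def pg qk fst_conv snd_conv .
    then have "{i. r1 g1 i = r1 k1 i} \<in> U1 \<and> {j. r2 g2 j = r2 k2 j} \<in> U2"
      by (rule combeq[OF conjunct1[OF cg1] conjunct1[OF cg2] conjunct1[OF ck1] conjunct1[OF ck2], THEN iffD1])
    then have "ultraN U1 L1 #>\<^bsub>prodgrp L1\<^esub> r1 g1 = ultraN U1 L1 #>\<^bsub>prodgrp L1\<^esub> r1 k1"
      "ultraN U2 L2 #>\<^bsub>prodgrp L2\<^esub> r2 g2 = ultraN U2 L2 #>\<^bsub>prodgrp L2\<^esub> r2 k2"
      using eq1[OF conjunct1[OF cg1] conjunct1[OF ck1]] eq2[OF conjunct1[OF cg2] conjunct1[OF ck2]] by blast+
    then have "\<pi>1 g1 = \<pi>1 k1" "\<pi>2 g2 = \<pi>2 k2"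
      using conjunct2[OF cg1] conjunct2[OF ck1] conjunct2[OF cg2] conjunct2[OF ck2] by simp_all
    then have "g1 = k1" "g2 = k2"
      using inj_onD[OF i1 _ pg(2) qk(2)] inj_onD[OF i2 _ pg(3) qk(3)] by blast+
    then show "p = q" using pg qk by simp
  qed

  have inter: "\<pi> ` carrier (G1 \<times>\<times> G2) \<inter> ultrasub U L (\<lambda>n. Hs n \<times> carrier (K1 \<times>\<times> K2)) = \<pi> ` (H1 \<times> H2)"
  proof (intro equalityI subsetI)
    fix Y assume Y: "Y \<in> \<pi> ` carrier (G1 \<times>\<times> G2) \<inter> ultrasub U L (\<lambda>n. Hs n \<times> carrier (K1 \<times>\<times> K2))"
    then obtain g1 g2 where g: "g1 \<in> carrier G1" "g2 \<in> carrier G2" and Xe: "Y = \<pi> (g1, g2)" by auto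
    note cg1 = r1[OF g(1)] and cg2 = r2[OF g(2)]
    have "ultraN U L #>\<^bsub>prodgrp L\<^esub> comb (r1 g1) (r2 g2) \<in> ultrasub U L (\<lambda>n. Hs n \<times> carrier (K1 \<times>\<times> K2))"
      using Y unfolding Xe \<pi>_def fst_conv snd_conv by blast
    then have "{i. r1 g1 i \<in> Hs1 i \<times> carrier K1} \<in> U1 \<and> {j. r2 g2 j \<in> Hs2 j \<times> carrier K2} \<in> U2"
      by (rule combsub[OF conjunct1[OF cg1] conjunct1[OF cg2], THEN iffD1])
    then have "ultraN U1 L1 #>\<^bsub>prodgrp L1\<^esub> r1 g1 \<in> ultrasub U1 L1 (\<lambda>i. Hs1 i \<times> carrier K1)"
       "ultraN U2 L2 #>\<^bsub>prodgrp L2\<^esub> r2 g2 \<in> ultrasub U2 L2 (\<lambda>i. Hs2 i \<times> carrier K2)"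
      using sub1[OF conjunct1[OF cg1]] sub2[OF conjunct1[OF cg2]] by blast+
    then have "\<pi>1 g1 \<in> ultrasub U1 L1 (\<lambda>i. Hs1 i \<times> carrier K1)" "\<pi>2 g2 \<in> ultrasub U2 L2 (\<lambda>i. Hs2 i \<times> carrier K2)"
      using conjunct2[OF cg1] conjunct2[OF cg2] by simp_all
    then have "\<pi>1 g1 \<in> \<pi>1 ` carrier G1 \<inter> ultrasub U1 L1 (\<lambda>i. Hs1 i \<times> carrier K1)"
        "\<pi>2 g2 \<in> \<pi>2 ` carrier G2 \<inter> ultrasub U2 L2 (\<lambda>i. Hs2 i \<times> carrier K2)"
      using g by simp_all
    then have "\<pi>1 g1 \<in> \<pi>1 ` H1" "\<pi>2 g2 \<in> \<pi>2 ` H2" unfolding s1' s2' .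
    then obtain h1 h2 where hh: "h1 \<in> H1" "\<pi>1 g1 = \<pi>1 h1" "h2 \<in> H2" "\<pi>2 g2 = \<pi>2 h2" by blast
    then have "g1 = h1" "g2 = h2"
      using inj_onD[OF i1 hh(2) g(1)] inj_onD[OF i2 hh(4) g(2)] H1c H2c by blast+
    then show "Y \<in> \<pi> ` (H1 \<times> H2)" using Xe hh by blast
  next
    fix Y assume "Y \<in> \<pi> ` (H1 \<times> H2)"
    then obtain g1 g2 where g: "g1 \<in> H1" "g2 \<in> H2" and Xe: "Y = \<pi> (g1, g2)" by auto
    have gc: "g1 \<in> carrier G1" "g2 \<in> carrier G2" using g H1c H2c by auto
    note cg1 = r1[OF gc(1)] and cg2 = r2[OF gc(2)]
    have "\<pi>1 g1 \<in> \<pi>1 ` H1" "\<pi>2 g2 \<in> \<pi>2 ` H2" using g by simp_all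
    then have "\<pi>1 g1 \<in> ultrasub U1 L1 (\<lambda>i. Hs1 i \<times> carrier K1)" "\<pi>2 g2 \<in> ultrasub U2 L2 (\<lambda>i. Hs2 i \<times> carrier K2)"
      unfolding s1'[symmetric] s2'[symmetric] by simp_all
    then have "ultraN U1 L1 #>\<^bsub>prodgrp L1\<^esub> r1 g1 \<in> ultrasub U1 L1 (\<lambda>i. Hs1 i \<times> carrier K1)"
       "ultraN U2 L2 #>\<^bsub>prodgrp L2\<^esub> r2 g2 \<in> ultrasub U2 L2 (\<lambda>i. Hs2 i \<times> carrier K2)"
      using conjunct2[OF cg1] conjunct2[OF cg2] by simp_all
    then have "{i. r1 g1 i \<in> Hs1 i \<times> carrier K1} \<in> U1 \<and> {j. r2 g2 j \<in> Hs2 j \<times> carrier K2} \<in> U2"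
      using sub1[OF conjunct1[OF cg1]] sub2[OF conjunct1[OF cg2]] by blast
    then have "ultraN U L #>\<^bsub>prodgrp L\<^esub> comb (r1 g1) (r2 g2) \<in> ultrasub U L (\<lambda>n. Hs n \<times> carrier (K1 \<times>\<times> K2))"
      by (rule combsub[OF conjunct1[OF cg1] conjunct1[OF cg2], THEN iffD2])
    then have "Y \<in> ultrasub U L (\<lambda>n. Hs n \<times> carrier (K1 \<times>\<times> K2))"
      unfolding Xe \<pi>_def fst_conv snd_conv .
    moreover have "Y \<in> \<pi> ` carrier (G1 \<times>\<times> G2)" using Xe gc by auto
    ultimately show "Y \<in> \<pi> ` carrier (G1 \<times>\<times> G2) \<inter> ultrasub U L (\<lambda>n. Hs n \<times> carrier (K1 \<times>\<times> K2))" by blast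
  qed

  have grp: "\<forall>i. group (Gs i) \<and> subgroup (Hs i) (Gs i) \<and> sofic (Gs i) \<and> amenable ((Gs i)\<lparr>carrier := Hs i\<rparr>)"
  proof
    fix i
    define a where "a = fst (prod_decode i)"
    define b where "b = snd (prod_decode i)"
    have ga: "group (Gs1 a)" "sofic (Gs1 a)" "amenable ((Gs1 a)\<lparr>carrier := Hs1 a\<rparr>)" using A1 by blast+
    have gb: "group (Gs2 b)" "sofic (Gs2 b)" "amenable ((Gs2 b)\<lparr>carrier := Hs2 b\<rparr>)" using A2 by blast+
    have "group (Gs1 a \<times>\<times> Gs2 b) \<and> subgroup (Hs1 a \<times> Hs2 b) (Gs1 a \<times>\<times> Gs2 b) \<and> sofic (Gs1 a \<times>\<times> Gs2 b)
       \<and> amenable ((Gs1 a \<times>\<times> Gs2 b)\<lparr>carrier := Hs1 a \<times> Hs2 b\<rparr>)"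
      using DirProd_group[OF ga(1) gb(1)] DirProd_subgroups[OF ga(1) sg1 gb(1) sg2]
        sofic_prod[OF ga(1) gb(1) ga(2) gb(2)] amenable_prod[OF ga(1) sg1 ga(3) gb(1) sg2 gb(3)]
      by blast
    then show "group (Gs i) \<and> subgroup (Hs i) (Gs i) \<and> sofic (Gs i) \<and> amenable ((Gs i)\<lparr>carrier := Hs i\<rparr>)"
      unfolding Gs_def Hs_def a_def b_def .
  qed
  show ?thesis
    unfolding rel_sofic_over_def
    apply (rule exI[of _ Gs], rule exI[of _ Hs], rule exI[of _ U], rule exI[of _ \<pi>])
    using grp U hom inj inter unfolding L_def by blast
qed

end
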